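(* Let $\alpha\in(1,2)$, let $f_k$ ($k\in\mathbb N$) be as in an admissible system, let $D_k:=\lfloor4^{\alpha k}\rfloor$, $\varphi_k:=\frac1{D_k}\sum_{j=0}^{D_k-1}f_k\circ T^j$ and $h_k:=f_k-\varphi_k$. Then $n^{-1/\alpha}\sum_{1\le k\le\frac1{2\alpha}\log n}S_n(h_k)\to0$ in probability (with respect to $m$) as $n\to\infty$.
   Context: $(\mathcal X,\mathcal B,m,T)$ is an ergodic, aperiodic probability preserving system; $\log$ is base $2$; $S_n(h):=\sum_{j=0}^{n-1}h\circ T^j$. $S_\alpha(\sigma,\beta,\mu)$ denotes the stable law with characteristic function $\exp\{-\sigma^\alpha|\theta|^\alpha(1-i\beta\,\mathrm{sign}(\theta)\tan(\pi\alpha/2))+i\mu\theta\}$ ($\alpha\neq1$). Triangular array: on $(\Omega,\mathcal F,\mathbb P)$ let $\{X_k(m):k,m\in\mathbb N\}$ be independent with $X_k(m)\sim S_\alpha(k^{-1/\alpha},1,0)$; $Y_k(m):=X_k(m)\mathbf 1_{[2^k\le X_k(m)\le4^k]}$; $Z_k(m):=\sum_{j=8^k}^{16^k}\frac{j}{4^k}\mathbf 1_{[j/4^k\le Y_k(m)<(j+1)/4^k]}$. Let $d_k:=4^{k^2}$. An admissible system is a sequence of measurable $f_k:\mathcal X\to\mathbb R$ such that the family $\{f_k\circ T^j:k\in\mathbb N,0\le j<2d_k\}$ has under $m$ the same joint distribution as $\{Z_k(j+1):k\in\mathbb N,0\le j<2d_k\}$, together with $g_k:=f_k\circ T^{d_k}$.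 *)

theory Defs
  imports "HOL-Probability.Probability"
begin

definition ergodic_aperiodic_pps :: "'a measure \<Rightarrow> ('a \<Rightarrow> 'a) \<Rightarrow> bool" where
  "ergodic_aperiodic_pps M T \<longleftrightarrow>
     prob_space M \<and> T \<in> measurable M M \<and> distr M M T = M \<and>
     (\<forall>A\<in>sets M. T -` A \<inter> space M = A \<longrightarrow> measure M A = 0 \<or> measure M A = 1) \<and>
     (AE x in M. \<forall>n::nat. n \<ge> 1 \<longrightarrow> (T ^^ n) x \<noteq> x)"

(* characteristic function of S_alpha(sigma,beta,mu), alpha \<noteq> 1 *)
definition stable_char :: "real \<Rightarrow> real \<Rightarrow> real \<Rightarrow> real \<Rightarrow> real \<Rightarrow> complex" where
  "stable_char \<alpha> \<sigma> \<beta> \<mu> \<theta> =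
     exp (- complex_of_real ((\<sigma> powr \<alpha>) * (\<bar>\<theta>\<bar> powr \<alpha>))
            * (1 - \<i> * complex_of_real (\<beta> * sgn \<theta> * tan (pi * \<alpha> / 2)))
          + \<i> * complex_of_real (\<mu> * \<theta>))"

definition has_stable_law ::
  "'b measure \<Rightarrow> ('b \<Rightarrow> real) \<Rightarrow> real \<Rightarrow> real \<Rightarrow> real \<Rightarrow> real \<Rightarrow> bool" where
  "has_stable_law P X \<alpha> \<sigma> \<beta> \<mu> \<longleftrightarrow>
     X \<in> borel_measurable P \<and> (\<forall>\<theta>. char (distr P borel X) \<theta> = stable_char \<alpha> \<sigma> \<beta> \<mu> \<theta>)"

definition Ytr :: "nat \<Rightarrow> real \<Rightarrow> real" where
  "Ytr k x = (if 2 ^ k \<le> x \<and> x \<le> 4 ^ k then x else 0)"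

definition Ztr :: "nat \<Rightarrow> real \<Rightarrow> real" where
  "Ztr k y = (\<Sum>j\<in>{8 ^ k .. 16 ^ k :: nat}.
      real j / 4 ^ k * (if real j / 4 ^ k \<le> y \<and> y < (real j + 1) / 4 ^ k then 1 else 0))"

definition dseq :: "nat \<Rightarrow> nat" where
  "dseq k = 4 ^ (k ^ 2)"

definition adm_index :: "(nat \<times> nat) set" where
  "adm_index = {(k, j). 1 \<le> k \<and> j < 2 * dseq k}"

(* (f_k) is an admissible system for (M,T), relative to the triangular array X on P:
   {f_k o T^j} under M has the same joint law as {Z_k(j+1)} under P *)
definition admissible ::
  "'a measure \<Rightarrow> ('a \<Rightarrow> 'a) \<Rightarrow> 'b measure \<Rightarrow> (nat \<Rightarrow> nat \<Rightarrow> 'b \<Rightarrow> real)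
     \<Rightarrow> (nat \<Rightarrow> 'a \<Rightarrow> real) \<Rightarrow> bool" where
  "admissible M T P X f \<longleftrightarrow>
     (\<forall>k. f k \<in> borel_measurable M) \<and>
     distr M (PiM adm_index (\<lambda>_. borel)) (\<lambda>x. \<lambda>i\<in>adm_index. f (fst i) ((T ^^ snd i) x))
     = distr P (PiM adm_index (\<lambda>_. borel))
         (\<lambda>\<omega>. \<lambda>i\<in>adm_index. Ztr (fst i) (Ytr (fst i) (X (fst i) (snd i + 1) \<omega>)))"

definition birkhoff_sum :: "('a \<Rightarrow> 'a) \<Rightarrow> nat \<Rightarrow> ('a \<Rightarrow> real) \<Rightarrow> 'a \<Rightarrow> real" where
  "birkhoff_sum T n h x = (\<Sum>j<n. h ((T ^^ j) x))"

definition tendsto_in_prob :: "'a measure \<Rightarrow> (nat \<Rightarrow> 'a \<Rightarrow> real) \<Rightarrow> real \<Rightarrow> bool" where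
  "tendsto_in_prob M Y c \<longleftrightarrow>
     (\<forall>\<epsilon>>0. (\<lambda>n. measure M {x \<in> space M. \<bar>Y n x - c\<bar> > \<epsilon>}) \<longlonglongrightarrow> 0)"

definition Dseq :: "real \<Rightarrow> nat \<Rightarrow> nat" where
  "Dseq \<alpha> k = nat \<lfloor>4 powr (\<alpha> * real k)\<rfloor>"

definition phi_seq :: "real \<Rightarrow> ('a \<Rightarrow> 'a) \<Rightarrow> (nat \<Rightarrow> 'a \<Rightarrow> real) \<Rightarrow> nat \<Rightarrow> 'a \<Rightarrow> real" where
  "phi_seq \<alpha> T f k x = (1 / real (Dseq \<alpha> k)) * (\<Sum>j<Dseq \<alpha> k. f k ((T ^^ j) x))"

definition h_seq :: "real \<Rightarrow> ('a \<Rightarrow> 'a) \<Rightarrow> (nat \<Rightarrow> 'a \<Rightarrow> real) \<Rightarrow> nat \<Rightarrow> 'a \<Rightarrow> real" where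
  "h_seq \<alpha> T f k x = f k x - phi_seq \<alpha> T f k x"

end

theory Submission
  imports Defs "HOL-Real_Asymp.Real_Asymp"
begin


lemma Ztr_formula:
  "Ztr k y = (if 8^k \<le> \<lfloor>4^k*y\<rfloor> \<and> \<lfloor>4^k*y\<rfloor> \<le> 16^k then real_of_int \<lfloor>4^k*y\<rfloor> / 4^k else 0)"
proof -
  have pos: "(0::real) < 4^k" by simp
  have iff: "(real j / 4 ^ k \<le> y \<and> y < (real j + 1) / 4 ^ k) \<longleftrightarrow> int j = \<lfloor>4^k*y\<rfloor>" for j :: nat
  proof -
    have "(real j / 4 ^ k \<le> y \<and> y < (real j + 1) / 4 ^ k) \<longleftrightarrow> (real j \<le> 4^k*y \<and> 4^k*y < real j + 1)"
      using pos by (simp add: divide_le_eq less_divide_eq mult.commute)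
    also have "\<dots> \<longleftrightarrow> int j = \<lfloor>4^k*y\<rfloor>"
      by (metis floor_eq_iff of_int_of_nat_eq)
    finally show ?thesis .
  qed
  have "Ztr k y = (\<Sum>j\<in>{8 ^ k .. 16 ^ k :: nat}. if int j = \<lfloor>4^k*y\<rfloor> then real j / 4 ^ k else 0)"
    unfolding Ztr_def by (intro sum.cong refl) (simp add: iff)
  also have "\<dots> = (if 8^k \<le> \<lfloor>4^k*y\<rfloor> \<and> \<lfloor>4^k*y\<rfloor> \<le> 16^k then real_of_int \<lfloor>4^k*y\<rfloor> / 4^k else 0)"
  proof (cases "8^k \<le> \<lfloor>4^k*y\<rfloor> \<and> \<lfloor>4^k*y\<rfloor> \<le> 16^k")
    case True
    define j0 where "j0 = nat \<lfloor>4^k*y\<rfloor>"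
    have j0: "int j0 = \<lfloor>4^k*y\<rfloor>" using True unfolding j0_def
      by (smt (verit) nat_0_le of_nat_le_0_iff zero_less_power)
    have mem: "j0 \<in> {8 ^ k .. 16 ^ k :: nat}" using True j0
      by (metis atLeastAtMost_iff of_nat_le_iff of_nat_numeral of_nat_power)
    have "(\<Sum>j\<in>{8 ^ k .. 16 ^ k :: nat}. if int j = \<lfloor>4^k*y\<rfloor> then real j / 4 ^ k else 0)
        = (\<Sum>j\<in>{8 ^ k .. 16 ^ k :: nat}. if j = j0 then real j / 4 ^ k else 0)"
      by (intro sum.cong refl) (use j0 in auto)
    also have "\<dots> = real j0 / 4^k" using mem by simp
    finally show ?thesis using True j0 by (metis of_int_of_nat_eq)
  next
    case False
    have "(\<Sum>j\<in>{8 ^ k .. 16 ^ k :: nat}. if int j = \<lfloor>4^k*y\<rfloor> then real j / 4 ^ k else 0) = 0"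
    proof (intro sum.neutral ballI)
      fix j assume "j \<in> {8 ^ k .. 16 ^ k :: nat}"
      then have h: "8^k \<le> int j \<and> int j \<le> 16^k"
        by (metis atLeastAtMost_iff of_nat_le_iff of_nat_numeral of_nat_power)
      have "int j \<noteq> \<lfloor>4^k*y\<rfloor>"
      proof
        assume "int j = \<lfloor>4^k*y\<rfloor>"
        with h False show False by simp
      qed
      then show "(if int j = \<lfloor>4^k*y\<rfloor> then real j / 4 ^ k else 0) = 0" by simp
    qed
    then show ?thesis unfolding if_not_P[OF False] .
  qed
  finally show ?thesis .
qed

lemma Ztr_nonneg: "0 \<le> Ztr k y"
proof -
  define z where "z = \<lfloor>(4::real)^k*y\<rfloor>"
  have "8^k \<le> z \<Longrightarrow> 0 \<le> real_of_int z / 4^k"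
  proof -
    assume "8^k \<le> z"
    moreover have "(0::int) \<le> 8^k" by simp
    ultimately have "0 \<le> z" by linarith
    then show ?thesis by simp
  qed
  then show ?thesis unfolding Ztr_formula z_def[symmetric] by simp
qed

lemma Ztr_le: "Ztr k y \<le> 4^k"
proof -
  define z where "z = \<lfloor>(4::real)^k*y\<rfloor>"
  have "z \<le> 16^k \<Longrightarrow> real_of_int z / 4^k \<le> 4^k"
  proof -
    assume "z \<le> 16^k"
    then have "real_of_int z \<le> 16^k"
      by (metis of_int_le_iff of_int_numeral of_int_power)
    also have "(16::real)^k = 4^k * 4^k" by (simp flip: power_mult_distrib)
    finally show ?thesis by (simp add: divide_le_eq)
  qed
  then show ?thesis unfolding Ztr_formula z_def[symmetric] by simp
qed

lemma Ztr_nz: assumes "Ztr k y \<noteq> 0" shows "2^k \<le> y" "Ztr k y \<le> y"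
proof -
  define z where "z = \<lfloor>(4::real)^k*y\<rfloor>"
  have cond: "8^k \<le> z \<and> z \<le> 16^k"
  proof (rule ccontr)
    assume "\<not> (8^k \<le> z \<and> z \<le> 16^k)"
    then have "Ztr k y = 0" unfolding Ztr_formula z_def[symmetric] by (simp only: if_False)
    with assms show False by simp
  qed
  have e: "Ztr k y = real_of_int z / 4^k"
    unfolding Ztr_formula z_def[symmetric] using cond by (simp only: simp_thms if_True)
  have zl: "real_of_int z \<le> 4^k * y" unfolding z_def by (rule of_int_floor_le)
  have "real_of_int z / 4^k \<le> (4^k*y)/4^k" by (rule divide_right_mono[OF zl]) simp
  then show "Ztr k y \<le> y" using e by simp
  have "real_of_int ((8::int)^k) \<le> real_of_int z" using cond by (simp only: of_int_le_iff)
  then have "(8::real)^k \<le> real_of_int z" by (simp only: of_int_power of_int_numeral)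
  then have "(8::real)^k \<le> 4^k*y" using zl by (rule order_trans)
  then have "(4::real)^k * 2^k \<le> 4^k*y" by (simp flip: power_mult_distrib)
  then show "2^k \<le> y" by simp
qed

lemma Ztr_meas[measurable]: "Ztr k \<in> borel_measurable borel"
  unfolding Ztr_def by measurable

lemma Ytr_meas[measurable]: "Ytr k \<in> borel_measurable borel"
  unfolding Ytr_def by measurable


lemma char_tail_bound:
  assumes mu: "real_distribution \<mu>" and u0: "u > 0"
  shows "u * measure \<mu> {x. abs x \<ge> 2 / u} \<le> Re (CLBINT t:{-u..u}. 1 - char \<mu> t)"
proof -
  interpret Mu: real_distribution \<mu> by fact

  have *: "\<And>u x. u > 0 \<Longrightarrow> x \<noteq> 0 \<Longrightarrow> (CLBINT t:{-u..u}. 1 - iexp (t * x)) =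
      2 * (u  - sin (u * x) / x)"
  proof -
    fix u :: real and x :: real
    assume "u > 0" and "x \<noteq> 0"
    hence "(CLBINT t:{-u..u}. 1 - iexp (t * x)) = (CLBINT t=-u..u. 1 - iexp (t * x))"
      by (subst interval_integral_Icc, auto)
    also have "\<dots> = (CLBINT t=-u..ereal 0. 1 - iexp (t * x)) + (CLBINT t= ereal 0..u. 1 - iexp (t * x))"
      using \<open>u > 0\<close>
      by (subst interval_integral_sum; force simp add: interval_integrable_isCont)
    also have "\<dots> = (CLBINT t=ereal 0..u. 1 - iexp (t * -x)) + (CLBINT t=ereal 0..u. 1 - iexp (t * x))"
      by (subst interval_integral_reflect, auto)
    also have "... = CLBINT xa=ereal 0..ereal u. 1 - iexp (xa * - x) + (1 - iexp (xa * x))"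
      by (subst interval_lebesgue_integral_add (2) [symmetric]) (auto simp: interval_integrable_isCont)
    also have "\<dots> = (LBINT t=ereal 0..u. 2 - 2 * cos (t * x))"
      unfolding exp_Euler cos_of_real by (simp flip: interval_lebesgue_integral_of_real)
    also have "\<dots> = 2 * u - 2 * sin (u * x) / x"
      by (subst interval_lebesgue_integral_diff)
         (auto intro!: interval_integrable_isCont
               simp: interval_lebesgue_integral_of_real integral_cos [OF \<open>x \<noteq> 0\<close>] mult.commute[of _ x])
    finally show "(CLBINT t:{-u..u}. 1 - iexp (t * x)) = 2 * (u  - sin (u * x) / x)"
      by (simp add: field_simps)
  qed
  have main_bound: "\<And>u. u > 0 \<Longrightarrow> Re (CLBINT t:{-u..u}. 1 - char \<mu> t) \<ge>
    u * measure \<mu> {x. abs x \<ge> 2 / u}"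
  proof -
    fix u :: real
    assume "u > 0"
    interpret P: pair_sigma_finite \<mu> lborel ..
    have Mn1 [simp]: "measure \<mu> UNIV = 1" by (metis Mu.prob_space Mu.space_eq_univ)
    have Mn2 [simp]: "\<And>x. complex_integrable \<mu> (\<lambda>t. exp (\<i> * complex_of_real (x * t)))"
      by (rule Mu.integrable_const_bound [where B = 1], auto)
    have Mn3: "set_integrable (\<mu> \<Otimes>\<^sub>M lborel) (UNIV \<times> {- u..u}) (\<lambda>a. 1 - exp (\<i> * complex_of_real (snd a * fst a)))"
      using \<open>0 < u\<close>
      unfolding set_integrable_def
      by (intro integrableI_bounded_set_indicator [where B="2"])
         (auto simp: lborel.emeasure_pair_measure_Times ennreal_mult_less_top not_less top_unique
               split: split_indicator
               intro!: order_trans [OF norm_triangle_ineq4])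
    have "(CLBINT t:{-u..u}. 1 - char \<mu> t) =
        (CLBINT t:{-u..u}. (CLINT x | \<mu>. 1 - iexp (t * x)))"
      unfolding char_def by (rule set_lebesgue_integral_cong, auto simp del: of_real_mult)
    also have "\<dots> = (CLBINT t. (CLINT x | \<mu>. indicator {-u..u} t *\<^sub>R (1 - iexp (t * x))))"
      unfolding set_lebesgue_integral_def
      by (rule Bochner_Integration.integral_cong) (auto split: split_indicator)
    also have "\<dots> = (CLINT x | \<mu>. (CLBINT t:{-u..u}. 1 - iexp (t * x)))"
      using Mn3 by (subst P.Fubini_integral) (auto simp: indicator_times split_beta' set_integrable_def set_lebesgue_integral_def)
    also have "\<dots> = (CLINT x | \<mu>. (if x = 0 then 0 else 2 * (u  - sin (u * x) / x)))"
      using \<open>u > 0\<close> by (intro Bochner_Integration.integral_cong, auto simp add: * simp del: of_real_mult)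
    also have "\<dots> = (LINT x | \<mu>. (if x = 0 then 0 else 2 * (u  - sin (u * x) / x)))"
      by (rule integral_complex_of_real)
    finally have "Re (CLBINT t:{-u..u}. 1 - char \<mu> t) =
       (LINT x | \<mu>. (if x = 0 then 0 else 2 * (u  - sin (u * x) / x)))" by simp
    also have "\<dots> \<ge> (LINT x : {x. abs x \<ge> 2 / u} | \<mu>. u)"
    proof -
      have "complex_integrable \<mu> (\<lambda>x. CLBINT t:{-u..u}. 1 - iexp (snd (x, t) * fst (x, t)))"
        using Mn3 unfolding set_integrable_def set_lebesgue_integral_def
        by (intro P.integrable_fst) (simp add: indicator_times split_beta')
      hence "complex_integrable \<mu> (\<lambda>x. if x = 0 then 0 else 2 * (u  - sin (u * x) / x))"
        using \<open>u > 0\<close>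
        unfolding set_integrable_def
        by (subst Bochner_Integration.integrable_cong) (auto simp add: * simp del: of_real_mult)
      hence **: "integrable \<mu> (\<lambda>x. if x = 0 then 0 else 2 * (u  - sin (u * x) / x))"
        unfolding complex_of_real_integrable_eq .
      have "2 * sin x \<le> x" if "2 \<le> x" for x :: real
        by (rule order_trans[OF _ \<open>2 \<le> x\<close>]) auto
      moreover have "x \<le> 2 * sin x" if "x \<le> - 2" for x :: real
        by (rule order_trans[OF \<open>x \<le> - 2\<close>]) auto
      moreover have "x < 0 \<Longrightarrow> x \<le> sin x" for x :: real
        using sin_x_le_x[of "-x"] by simp
      ultimately show ?thesis
        using \<open>u > 0\<close> unfolding set_lebesgue_integral_def
        by (intro integral_mono [OF _ **])
           (auto simp: divide_simps sin_x_le_x mult.commute[of u] mult_neg_pos top_unique less_top[symmetric]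
                 split: split_indicator)
    qed
    also (xtrans) have "(LINT x : {x. abs x \<ge> 2 / u} | \<mu>. u) = u * measure \<mu> {x. abs x \<ge> 2 / u}"
      unfolding set_lebesgue_integral_def
      by (simp add: Mu.emeasure_eq_measure)
    finally show "Re (CLBINT t:{-u..u}. 1 - char \<mu> t) \<ge> u * measure \<mu> {x. abs x \<ge> 2 / u}" .
  qed
  show ?thesis using main_bound[OF u0] by simp
qed


lemma stable_char_bound:
  assumes a: "0 < \<alpha>" and s: "0 < \<sigma>"
  shows "cmod (1 - stable_char \<alpha> \<sigma> 1 0 t) \<le> (1 + \<bar>tan (pi * \<alpha> / 2)\<bar>) * (\<sigma> powr \<alpha> * \<bar>t\<bar> powr \<alpha>)"
proof -
  define S where "S = \<sigma> powr \<alpha> * \<bar>t\<bar> powr \<alpha>"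
  define c where "c = sgn t * tan (pi * \<alpha> / 2)"
  have S0: "0 \<le> S" unfolding S_def by simp
  have e: "stable_char \<alpha> \<sigma> 1 0 t = exp (complex_of_real (-S)) * iexp (S * c)"
    unfolding stable_char_def S_def c_def
    by (simp add: exp_add[symmetric] algebra_simps)
  have "1 - stable_char \<alpha> \<sigma> 1 0 t = complex_of_real (1 - exp (-S)) + complex_of_real (exp (-S)) * (1 - iexp (S*c))"
    unfolding e by (simp add: algebra_simps) (metis exp_of_real of_real_minus)
  then have "cmod (1 - stable_char \<alpha> \<sigma> 1 0 t) \<le> cmod (complex_of_real (1 - exp (-S))) + cmod (complex_of_real (exp (-S)) * (1 - iexp (S*c)))"
    by (metis norm_triangle_ineq)
  also have "cmod (complex_of_real (1 - exp (-S))) = 1 - exp (-S)"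
  proof -
    have "exp (-S) \<le> 1" using S0 by simp
    then show ?thesis by (simp only: norm_of_real abs_of_nonneg diff_ge_0_iff_ge)
  qed
  also have "1 - exp (-S) \<le> S" using exp_ge_add_one_self[of "-S"] by simp
  also have "cmod (complex_of_real (exp (-S)) * (1 - iexp (S*c))) = exp (-S) * cmod (1 - iexp (S*c))"
    by (simp add: norm_mult)
  also have "\<dots> \<le> 1 * \<bar>S*c\<bar>"
  proof (rule mult_mono)
    show "exp (-S) \<le> 1" using S0 by simp
    have "cmod (iexp (S*c) - 1) \<le> \<bar>S*c\<bar>" using iexp_approx1[of "S*c" 0] by simp
    then show "cmod (1 - iexp (S*c)) \<le> \<bar>S*c\<bar>" by (simp add: norm_minus_commute)
  qed auto
  also have "\<bar>S*c\<bar> \<le> S * \<bar>tan (pi * \<alpha> / 2)\<bar>"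
    using S0 unfolding c_def by (auto simp: abs_mult sgn_if)
  finally show ?thesis unfolding S_def by (simp add: algebra_simps)
qed


lemma stable_tail:
  assumes mu: "real_distribution \<mu>" and ch: "\<And>\<theta>. char \<mu> \<theta> = stable_char \<alpha> \<sigma> 1 0 \<theta>"
    and a: "0 < \<alpha>" and s: "0 < \<sigma>" and x: "0 < x"
  shows "measure \<mu> {y. x \<le> \<bar>y\<bar>} \<le> 2 * (1 + \<bar>tan (pi * \<alpha> / 2)\<bar>) * 2 powr \<alpha> * \<sigma> powr \<alpha> * x powr (-\<alpha>)"
proof -
  interpret Mu: real_distribution \<mu> by fact
  define u where "u = 2 / x"
  have u0: "0 < u" using x unfolding u_def by simp
  define c where "c = 1 + \<bar>tan (pi * \<alpha> / 2)\<bar>"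
  define B where "B = c * (\<sigma> powr \<alpha> * u powr \<alpha>)"
  have cont: "continuous_on {-u..u} (\<lambda>t. 1 - char \<mu> t)"
    by (intro continuous_at_imp_continuous_on ballI continuous_intros Mu.isCont_char)
  have si1: "set_integrable lborel {-u..u} (\<lambda>t. 1 - char \<mu> t)"
    by (rule borel_integrable_atLeastAtMost'[OF cont])
  have si2: "set_integrable lborel {-u..u} (\<lambda>t. cmod (1 - char \<mu> t))"
    by (rule borel_integrable_atLeastAtMost') (intro continuous_on_norm cont)
  have si3: "set_integrable lborel {-u..u} (\<lambda>t. B)"
    by (rule borel_integrable_atLeastAtMost') (rule continuous_on_const)
  have "u * measure \<mu> {y. abs y \<ge> 2 / u} \<le> Re (CLBINT t:{-u..u}. 1 - char \<mu> t)"
    by (rule char_tail_bound[OF mu u0])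
  also have "\<dots> \<le> cmod (CLBINT t:{-u..u}. 1 - char \<mu> t)" by (rule complex_Re_le_cmod)
  also have "\<dots> \<le> (LBINT t:{-u..u}. cmod (1 - char \<mu> t))" by (rule set_integral_norm_bound[OF si1])
  also have "\<dots> \<le> (LBINT t:{-u..u}. B)"
  proof (rule set_integral_mono[OF si2 si3])
    fix t assume t: "t \<in> {-u..u}"
    have "cmod (1 - char \<mu> t) \<le> c * (\<sigma> powr \<alpha> * \<bar>t\<bar> powr \<alpha>)"
      unfolding ch c_def by (rule stable_char_bound[OF a s])
    also have "\<dots> \<le> B" unfolding B_def c_def
      using t a by (intro mult_left_mono powr_mono2) auto
    finally show "cmod (1 - char \<mu> t) \<le> B" .
  qed
  also have "(LBINT t:{-u..u}. B) = 2 * u * B"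
    using u0 by (simp add: set_integral_const)
  finally have "u * measure \<mu> {y. abs y \<ge> 2 / u} \<le> u * (2 * B)" by simp
  then have "measure \<mu> {y. abs y \<ge> 2 / u} \<le> 2 * B" using u0 by simp
  moreover have "2 / u = x" unfolding u_def using x by simp
  moreover have "u powr \<alpha> = 2 powr \<alpha> * x powr (-\<alpha>)"
  proof -
    have "(2/x) powr \<alpha> = 2 powr \<alpha> / x powr \<alpha>" using x by (simp add: powr_divide)
    then show ?thesis unfolding u_def by (simp add: powr_minus divide_inverse)
  qed
  ultimately show ?thesis unfolding B_def c_def by (simp add: algebra_simps)
qed


definition qa :: "real \<Rightarrow> real" where "qa \<alpha> = 2 powr (2 - \<alpha>)"
definition Atail :: "real \<Rightarrow> real" where "Atail \<alpha> = 2 * (1 + \<bar>tan (pi * \<alpha> / 2)\<bar>) * 2 powr \<alpha>"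
definition Kz :: "real \<Rightarrow> real" where "Kz \<alpha> = 4 * Atail \<alpha> * qa \<alpha> / (qa \<alpha> - 1)"

lemma Z2_pointwise:
  assumes k: "1 \<le> k"
  shows "(Ztr k (Ytr k x))^2 \<le> (\<Sum>l\<in>{k..2*k}. 4^(l+1) * indicator {y. 2^l \<le> \<bar>y\<bar>} x)"
proof (cases "Ztr k (Ytr k x) = 0")
  case True
  then show ?thesis by (simp add: sum_nonneg)
next
  case False
  have y1: "2^k \<le> Ytr k x" and y2: "Ztr k (Ytr k x) \<le> Ytr k x" using Ztr_nz[OF False] by auto
  have "(0::real) < 2^k" by simp
  then have "0 < Ytr k x" using y1 by (rule less_le_trans)
  then have "Ytr k x \<noteq> 0" by simp
  then have yx: "Ytr k x = x" and x4: "x \<le> 4^k" unfolding Ytr_def by (auto split: if_splits)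
  have x2: "2^k \<le> x" using y1 yx by simp
  have x0: "0 \<le> x" using \<open>0 < Ytr k x\<close> yx by simp
  define L where "L = Max {l\<in>{k..2*k}. (2::real)^l \<le> x}"
  have fin: "finite {l\<in>{k..2*k}. (2::real)^l \<le> x}" by simp
  have ne: "k \<in> {l\<in>{k..2*k}. (2::real)^l \<le> x}" using x2 by simp
  have Lmem: "L \<in> {l\<in>{k..2*k}. (2::real)^l \<le> x}" unfolding L_def by (rule Max_in[OF fin]) (use ne in blast)
  have Lmax: "l \<le> L" if "l \<in> {l\<in>{k..2*k}. (2::real)^l \<le> x}" for l
    unfolding L_def using fin that by (rule Max_ge)
  have xL: "x^2 \<le> 4^(L+1)"
  proof (cases "L = 2*k")
    case True
    have "x^2 \<le> (4^k)^2" using x4 x0 by (rule power_mono)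
    also have "((4::real)^k)^2 = 4^(2*k)" by (simp add: power_mult[symmetric] mult.commute)
    also have "\<dots> \<le> 4^(L+1)" using True by (intro power_increasing) auto
    finally show ?thesis .
  next
    case False
    then have "L+1 \<in> {k..2*k}" using Lmem by auto
    moreover have "\<not> (L+1 \<le> L)" by simp
    ultimately have "\<not> (2::real)^(L+1) \<le> x" using Lmax by blast
    then have "x < 2^(L+1)" by simp
    then have "x^2 \<le> (2^(L+1))^2" using x0 by (intro power_mono) auto
    also have "((2::real)^(L+1))^2 = 4^(L+1)" by (simp add: power2_eq_square flip: power_mult_distrib)
    finally show ?thesis .
  qed
  have "(Ztr k (Ytr k x))^2 \<le> x^2" using y2 yx Ztr_nonneg[of k "Ytr k x"] by (intro power_mono) auto
  also have "\<dots> \<le> 4^(L+1) * indicator {y. 2^L \<le> \<bar>y\<bar>} x"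
    using xL Lmem x2 by (auto simp: indicator_def)
  also have "\<dots> \<le> (\<Sum>l\<in>{k..2*k}. 4^(l+1) * indicator {y. 2^l \<le> \<bar>y\<bar>} x)"
    using Lmem by (intro member_le_sum) auto
  finally show ?thesis .
qed


lemma pow_identity: "(4::real)^(l+1) * ((2::real)^l) powr (-\<alpha>) = 4 * (qa \<alpha>)^l"
proof -
  have "(2::real)^l = 2 powr (real l)" by (simp add: powr_realpow)
  then have a: "((2::real)^l) powr (-\<alpha>) = 2 powr (real l * (-\<alpha>))" by (simp add: powr_powr)
  have "2 powr (real l * 2) = 2 powr (real (2*l))" by (simp add: mult.commute)
  also have "\<dots> = 2^(2*l)" by (rule powr_realpow) simp
  also have "\<dots> = (4::real)^l" by (simp add: power_mult)
  finally have b: "(4::real)^l = 2 powr (real l * 2)" by simp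
  have c: "(qa \<alpha>)^l = 2 powr (real l * (2 - \<alpha>))" unfolding qa_def by (simp add: powr_power)
  have "(4::real)^(l+1) * ((2::real)^l) powr (-\<alpha>) = 4 * (2 powr (real l * 2) * 2 powr (real l * (-\<alpha>)))"
    using a b by simp
  also have "\<dots> = 4 * 2 powr (real l * (2 - \<alpha>))" by (simp add: powr_add[symmetric] algebra_simps)
  finally show ?thesis using c by simp
qed

lemma Z2_bound:
  assumes P: "prob_space P" and xi: "\<xi> \<in> borel_measurable P"
    and ch: "\<And>\<theta>. char (distr P borel \<xi>) \<theta> = stable_char \<alpha> \<sigma> 1 0 \<theta>"
    and a: "1 < \<alpha>" "\<alpha> < 2" and s: "0 < \<sigma>" and sk: "\<sigma> powr \<alpha> = 1 / real k" and k: "1 \<le> k"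
  shows "(\<integral>\<omega>. (Ztr k (Ytr k (\<xi> \<omega>)))^2 \<partial>P) \<le> Kz \<alpha> * 4 powr (real k * (2-\<alpha>)) / real k"
proof -
  interpret prob_space P by fact
  define \<mu> where "\<mu> = distr P borel \<xi>"
  have mu: "real_distribution \<mu>" unfolding \<mu>_def using xi by simp
  define q where "q = qa \<alpha>"
  have q1: "1 < q" unfolding q_def qa_def using a by simp
  have At0: "0 \<le> Atail \<alpha>" unfolding Atail_def by simp
  have int1: "integrable P (\<lambda>\<omega>. (Ztr k (Ytr k (\<xi> \<omega>)))^2)"
  proof (rule integrable_const_bound[where B="(4^k)^2"])
    show "AE x in P. norm ((Ztr k (Ytr k (\<xi> x)))\<^sup>2) \<le> (4 ^ k)\<^sup>2"
      using Ztr_nonneg Ztr_le by (auto intro!: power_mono)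
  qed (use xi in measurable)
  have int_ind: "integrable P (\<lambda>\<omega>. indicator {y. 2^l \<le> \<bar>y\<bar>} (\<xi> \<omega>) :: real)" for l :: nat
    by (rule integrable_const_bound[where B=1]) (use xi in \<open>auto split: split_indicator\<close>)
  have ind_eq: "(\<integral>\<omega>. indicator {y. 2^l \<le> \<bar>y\<bar>} (\<xi> \<omega>) \<partial>P) = measure \<mu> {y. 2^l \<le> \<bar>y\<bar>}" for l :: nat
  proof -
    have "(\<integral>\<omega>. indicator {y. 2^l \<le> \<bar>y\<bar>} (\<xi> \<omega>) \<partial>P) = (\<integral>y. indicator {y. 2^l \<le> \<bar>y\<bar>} y \<partial>\<mu> :: real)"
    proof -
      have m: "(indicator {y. 2^l \<le> \<bar>y\<bar>} :: real \<Rightarrow> real) \<in> borel_measurable borel" by measurable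
      show ?thesis unfolding \<mu>_def by (rule integral_distr[OF xi m, symmetric])
    qed
    also have "\<dots> = measure \<mu> {y. 2^l \<le> \<bar>y\<bar>}" unfolding \<mu>_def by simp
    finally show ?thesis .
  qed
  have "(\<integral>\<omega>. (Ztr k (Ytr k (\<xi> \<omega>)))^2 \<partial>P) \<le>
      (\<integral>\<omega>. (\<Sum>l\<in>{k..2*k}. 4^(l+1) * indicator {y. 2^l \<le> \<bar>y\<bar>} (\<xi> \<omega>)) \<partial>P)"
  proof (rule integral_mono[OF int1])
    show "integrable P (\<lambda>\<omega>. \<Sum>l\<in>{k..2*k}. (4::real)^(l+1) * indicator {y. 2^l \<le> \<bar>y\<bar>} (\<xi> \<omega>))"
      by (intro Bochner_Integration.integrable_sum Bochner_Integration.integrable_mult_right int_ind)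
    show "(Ztr k (Ytr k (\<xi> x)))\<^sup>2 \<le> (\<Sum>l\<in>{k..2*k}. 4^(l+1) * indicator {y. 2^l \<le> \<bar>y\<bar>} (\<xi> x))" for x
      by (rule Z2_pointwise[OF k])
  qed
  also have "\<dots> = (\<Sum>l\<in>{k..2*k}. 4^(l+1) * measure \<mu> {y. 2^l \<le> \<bar>y\<bar>})"
    by (subst Bochner_Integration.integral_sum) (auto intro!: int_ind simp: ind_eq)
  also have "\<dots> \<le> (\<Sum>l\<in>{k..2*k}. 4^(l+1) * (Atail \<alpha> * \<sigma> powr \<alpha> * ((2::real)^l) powr (-\<alpha>)))"
  proof (rule sum_mono, rule mult_left_mono)
    fix l assume "l \<in> {k..2*k}"
    show "measure \<mu> {y. 2^l \<le> \<bar>y\<bar>} \<le> Atail \<alpha> * \<sigma> powr \<alpha> * ((2::real)^l) powr (-\<alpha>)"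
      unfolding Atail_def using stable_tail[OF mu ch[unfolded \<mu>_def[symmetric]], of "2^l"] a s by simp
  qed simp
  also have "\<dots> = (\<Sum>l\<in>{k..2*k}. (Atail \<alpha> / real k) * (4 * q^l))"
    by (intro sum.cong refl) (simp add: sk pow_identity[symmetric] q_def algebra_simps)
  also have "\<dots> = (4 * Atail \<alpha> / real k) * (\<Sum>l\<in>{k..2*k}. q^l)"
    by (simp add: sum_distrib_left sum_divide_distrib algebra_simps)
  also have "\<dots> \<le> (4 * Atail \<alpha> / real k) * (q * 4 powr (real k * (2-\<alpha>)) / (q - 1))"
  proof (rule mult_left_mono)
    have "(\<Sum>l\<in>{k..2*k}. q^l) \<le> (\<Sum>l<2*k+1. q^l)"
      using q1 by (intro sum_mono2) auto
    also have "(\<Sum>l<2*k+1. q^l) = (q^(2*k+1) - 1) / (q - 1)"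
      using q1 by (intro geometric_sum) simp
    also have "\<dots> \<le> q * q^(2*k) / (q - 1)"
      using q1 by (intro divide_right_mono) auto
    also have "q^(2*k) = 4 powr (real k * (2-\<alpha>))"
    proof -
      have "q^(2*k) = 2 powr (real (2*k) * (2-\<alpha>))" unfolding q_def qa_def by (simp add: powr_power)
      also have "\<dots> = 2 powr (2 * (real k * (2-\<alpha>)))" by (simp add: algebra_simps)
      also have "\<dots> = (2 powr 2) powr (real k * (2-\<alpha>))" by (simp only: powr_powr)
      finally show ?thesis by simp
    qed
    finally show "(\<Sum>l\<in>{k..2*k}. q^l) \<le> q * 4 powr (real k * (2-\<alpha>)) / (q - 1)" .
    show "0 \<le> 4 * Atail \<alpha> / real k" using At0 by simp
  qed
  finally show ?thesis unfolding Kz_def q_def by (simp add: algebra_simps)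
qed


lemma pps_basic:
  assumes sys: "ergodic_aperiodic_pps M T"
  shows "prob_space M" "T \<in> measurable M M" "(T^^n) \<in> measurable M M" "distr M M (T^^n) = M"
proof -
  show P: "prob_space M" and T: "T \<in> measurable M M" using sys unfolding ergodic_aperiodic_pps_def by auto
  have inv: "distr M M T = M" using sys unfolding ergodic_aperiodic_pps_def by auto
  show "(T^^n) \<in> measurable M M" using T by (rule measurable_compose_n)
  show "distr M M (T^^n) = M"
  proof (induction n)
    case 0 then show ?case by simp
  next
    case (Suc n)
    have "distr M M (T^^Suc n) = distr M M ((T^^n) \<circ> T)" by (simp only: funpow_Suc_right)
    also have "\<dots> = distr (distr M M T) M (T^^n)"
      by (rule distr_distr[symmetric]) (use T measurable_compose_n[OF T] in auto)
    also have "\<dots> = M" using inv Suc by simp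
    finally show ?case .
  qed
qed

definition bnd :: "'a measure \<Rightarrow> ('a \<Rightarrow> real) \<Rightarrow> bool" where
  "bnd M g \<longleftrightarrow> g \<in> borel_measurable M \<and> (\<exists>B. AE x in M. \<bar>g x\<bar> \<le> B)"

lemma bnd_const[simp]: "bnd M (\<lambda>x. c)"
  unfolding bnd_def by (auto intro!: exI[of _ "\<bar>c\<bar>"])

lemma bnd_add: "bnd M f \<Longrightarrow> bnd M g \<Longrightarrow> bnd M (\<lambda>x. f x + g x)"
  unfolding bnd_def
proof (elim conjE exE, intro conjI)
  fix B C assume "AE x in M. \<bar>f x\<bar> \<le> B" "AE x in M. \<bar>g x\<bar> \<le> C"
  then show "\<exists>B. AE x in M. \<bar>f x + g x\<bar> \<le> B"
    by (intro exI[of _ "B + C"]) (auto elim!: eventually_elim2)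
qed auto

lemma bnd_diff: "bnd M f \<Longrightarrow> bnd M g \<Longrightarrow> bnd M (\<lambda>x. f x - g x)"
  unfolding bnd_def
proof (elim conjE exE, intro conjI)
  fix B C assume "AE x in M. \<bar>f x\<bar> \<le> B" "AE x in M. \<bar>g x\<bar> \<le> C"
  then show "\<exists>B. AE x in M. \<bar>f x - g x\<bar> \<le> B"
    by (intro exI[of _ "B + C"]) (auto elim!: eventually_elim2)
qed auto

lemma bnd_mult: "bnd M f \<Longrightarrow> bnd M g \<Longrightarrow> bnd M (\<lambda>x. f x * g x)"
  unfolding bnd_def
proof (elim conjE exE, intro conjI)
  fix B C assume "AE x in M. \<bar>f x\<bar> \<le> B" "AE x in M. \<bar>g x\<bar> \<le> C"
  then show "\<exists>B. AE x in M. \<bar>f x * g x\<bar> \<le> B"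
  proof (intro exI[of _ "B * C"])
    assume "AE x in M. \<bar>f x\<bar> \<le> B" "AE x in M. \<bar>g x\<bar> \<le> C"
    then show "AE x in M. \<bar>f x * g x\<bar> \<le> B * C"
    proof (eventually_elim)
      case (elim x)
      then show ?case unfolding abs_mult by (intro mult_mono) auto
    qed
  qed
qed auto

lemma bnd_sum: "(\<And>i. i \<in> I \<Longrightarrow> bnd M (f i)) \<Longrightarrow> bnd M (\<lambda>x. \<Sum>i\<in>I. f i x)"
proof (induction I rule: infinite_finite_induct)
  case (insert i I)
  then show ?case by (simp add: bnd_add)
qed simp_all

lemma bnd_power2: "bnd M f \<Longrightarrow> bnd M (\<lambda>x. (f x)^2)"
  unfolding power2_eq_square by (rule bnd_mult)

lemma bnd_abs: "bnd M f \<Longrightarrow> bnd M (\<lambda>x. \<bar>f x\<bar>)"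
  unfolding bnd_def by auto

lemma bnd_cmult: "bnd M f \<Longrightarrow> bnd M (\<lambda>x. c * f x)"
  using bnd_mult[OF bnd_const] .

lemma bnd_integrable: assumes "finite_measure M" "bnd M f" shows "integrable M f"
proof -
  obtain B where f: "f \<in> borel_measurable M" and B: "AE x in M. \<bar>f x\<bar> \<le> B"
    using assms(2) unfolding bnd_def by auto
  have "AE x in M. norm (f x) \<le> B" using B by simp
  then show ?thesis using finite_measure.integrable_const_bound[OF assms(1)] f by blast
qed

lemma bnd_compose:
  assumes "S \<in> measurable M M" "distr M M S = M" "bnd M f"
  shows "bnd M (\<lambda>x. f (S x))"
proof -
  obtain B where f: "f \<in> borel_measurable M" and B: "AE x in M. \<bar>f x\<bar> \<le> B"
    using assms(3) unfolding bnd_def by auto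
  have "AE x in distr M M S. \<bar>f x\<bar> \<le> B" unfolding assms(2) by (rule B)
  then have "AE x in M. \<bar>f (S x)\<bar> \<le> B"
    by (subst (asm) AE_distr_iff) (use assms(1) f in auto)
  moreover have "(\<lambda>x. f (S x)) \<in> borel_measurable M"
    using assms(1) f by measurable
  ultimately show ?thesis unfolding bnd_def by auto
qed

lemma integral_invariant:
  fixes f :: "'a \<Rightarrow> real"
  assumes "S \<in> measurable M M" "distr M M S = M" "f \<in> borel_measurable M"
  shows "(\<integral>x. f (S x) \<partial>M) = (\<integral>x. f x \<partial>M)"
proof -
  have "(\<integral>x. f (S x) \<partial>M) = (\<integral>x. f x \<partial>distr M M S)"
  proof -
    have "integral\<^sup>L (distr M M S) f = (\<integral>x. f (S x) \<partial>M)"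
      by (rule integral_distr) (use assms in auto)
    then show ?thesis by simp
  qed
  then show ?thesis using assms(2) by simp
qed

lemma abs_integral_sq:
  assumes "prob_space M" "integrable M g" "integrable M (\<lambda>x. (g x)^2)"
  shows "(\<integral>x. \<bar>g x\<bar> \<partial>M) \<le> sqrt (\<integral>x. (g x)^2 \<partial>M)"
proof -
  interpret prob_space M by fact
  have i1: "integrable M (\<lambda>x. \<bar>g x\<bar>)" using assms(2) by simp
  have i2: "integrable M (\<lambda>x. (\<bar>g x\<bar>)^2)" using assms(3) by simp
  have "0 \<le> variance (\<lambda>x. \<bar>g x\<bar>)" by (simp add: integral_nonneg)
  also have "variance (\<lambda>x. \<bar>g x\<bar>) = (\<integral>x. (\<bar>g x\<bar>)^2 \<partial>M) - (\<integral>x. \<bar>g x\<bar> \<partial>M)^2"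
    by (rule variance_eq[OF i1 i2])
  finally have "(\<integral>x. \<bar>g x\<bar> \<partial>M)^2 \<le> (\<integral>x. (g x)^2 \<partial>M)" by simp
  then show ?thesis using real_le_rsqrt by blast
qed


lemma shift_sum:
  fixes a :: "nat \<Rightarrow> real"
  shows "(\<Sum>l<n. a (l + j)) = (\<Sum>l<n. a l) - (\<Sum>i<j. a i) + (\<Sum>i<j. a (n + i))"
proof (induction j)
  case 0 then show ?case by simp
next
  case (Suc j)
  have s: "(\<Sum>l<n. a (Suc l + j)) = (\<Sum>l<n. a (l + j)) - a j + a (n + j)"
  proof -
    have "(\<Sum>l<Suc n. a (l + j)) = a j + (\<Sum>l<n. a (Suc l + j))"
      by (subst sum.lessThan_Suc_shift) simp
    moreover have "(\<Sum>l<Suc n. a (l + j)) = (\<Sum>l<n. a (l + j)) + a (n + j)" by simp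
    ultimately show ?thesis by simp
  qed
  have "(\<Sum>l<n. a (l + Suc j)) = (\<Sum>l<n. a (Suc l + j))" by simp
  also have "\<dots> = (\<Sum>l<n. a (l + j)) - a j + a (n + j)" by (rule s)
  also have "\<dots> = (\<Sum>l<n. a l) - (\<Sum>i<Suc j. a i) + (\<Sum>i<Suc j. a (n + i))"
    using Suc by simp
  finally show ?case .
qed

definition Gfun :: "real \<Rightarrow> ('a \<Rightarrow> 'a) \<Rightarrow> (nat \<Rightarrow> 'a \<Rightarrow> real) \<Rightarrow> nat \<Rightarrow> 'a \<Rightarrow> real" where
  "Gfun \<alpha> T f k x = (1 / real (Dseq \<alpha> k)) * (\<Sum>j<Dseq \<alpha> k. \<Sum>i<j. f k ((T^^i) x))"

lemma birk_h_eq: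
  assumes D: "Dseq \<alpha> k > 0"
  shows "birkhoff_sum T n (h_seq \<alpha> T f k) x = Gfun \<alpha> T f k x - Gfun \<alpha> T f k ((T^^n) x)"
proof -
  define D where "D = Dseq \<alpha> k"
  define a where "a l = f k ((T^^l) x)" for l
  have D0: "real D > 0" using D unfolding D_def by simp
  have comp: "(T^^j) ((T^^l) x) = (T^^(l + j)) x" for j l
    by (simp add: funpow_add add.commute)
  have "birkhoff_sum T n (h_seq \<alpha> T f k) x = (\<Sum>l<n. a l - (1 / real D) * (\<Sum>j<D. a (l + j)))"
    unfolding birkhoff_sum_def h_seq_def phi_seq_def D_def[symmetric] a_def comp ..
  also have "\<dots> = (\<Sum>l<n. a l) - (1 / real D) * (\<Sum>j<D. \<Sum>l<n. a (l + j))"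
    by (simp add: sum_subtractf sum_distrib_left sum.swap[of _ "{..<n}"])
  also have "(\<Sum>j<D. \<Sum>l<n. a (l + j)) = (\<Sum>j<D. (\<Sum>l<n. a l) - (\<Sum>i<j. a i) + (\<Sum>i<j. a (n + i)))"
    by (intro sum.cong refl shift_sum)
  also have "\<dots> = real D * (\<Sum>l<n. a l) - (\<Sum>j<D. \<Sum>i<j. a i) + (\<Sum>j<D. \<Sum>i<j. a (n + i))"
    by (simp add: sum.distrib sum_subtractf)
  also have "(\<Sum>l<n. a l) - (1 / real D) * (real D * (\<Sum>l<n. a l) - (\<Sum>j<D. \<Sum>i<j. a i) + (\<Sum>j<D. \<Sum>i<j. a (n + i)))
      = (1 / real D) * (\<Sum>j<D. \<Sum>i<j. a i) - (1 / real D) * (\<Sum>j<D. \<Sum>i<j. a (n + i))"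
    using D0 by (simp add: field_simps)
  also have "(\<Sum>j<D. \<Sum>i<j. a (n + i)) = (\<Sum>j<D. \<Sum>i<j. f k ((T^^i) ((T^^n) x)))"
    unfolding a_def comp by (simp add: add.commute)
  finally show ?thesis unfolding Gfun_def D_def[symmetric] a_def by simp
qed


lemma sq_sum_integral:
  fixes Z :: "nat \<Rightarrow> 'a \<Rightarrow> real"
  assumes fm: "finite_measure M" and b: "\<And>i. bnd M (Z i)"
  shows "(\<integral>x. (\<Sum>i<j. Z i x)^2 \<partial>M) = (\<Sum>i<j. \<Sum>i'<j. \<integral>x. Z i x * Z i' x \<partial>M)"
proof -
  have "(\<lambda>x. (\<Sum>i<j. Z i x)^2) = (\<lambda>x. \<Sum>i<j. \<Sum>i'<j. Z i x * Z i' x)"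
    by (simp add: power2_eq_square sum_product)
  moreover have "(\<integral>x. (\<Sum>i<j. \<Sum>i'<j. Z i x * Z i' x) \<partial>M) = (\<Sum>i<j. \<Sum>i'<j. \<integral>x. Z i x * Z i' x \<partial>M)"
    by (simp add: Bochner_Integration.integral_sum bnd_integrable[OF fm] bnd_mult b bnd_sum
        Bochner_Integration.integrable_sum)
  ultimately show ?thesis by simp
qed

lemma var_bound:
  fixes F :: "nat \<Rightarrow> 'a \<Rightarrow> real"
  assumes P: "prob_space M"
    and bF: "\<And>i. bnd M (F i)"
    and mean: "\<And>i. (\<integral>x. F i x \<partial>M) = \<mu>"
    and sq: "\<And>i. (\<integral>x. (F i x)^2 \<partial>M) = s2"
    and unc: "\<And>i i'. i < D \<Longrightarrow> i' < D \<Longrightarrow> i \<noteq> i' \<Longrightarrow> (\<integral>x. F i x * F i' x \<partial>M) = \<mu>^2"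
    and D: "0 < D"
  shows "(\<integral>x. ((1 / real D) * (\<Sum>j<D. \<Sum>i<j. F i x) - (1 / real D) * (\<Sum>j<D. real j * \<mu>))^2 \<partial>M) \<le> real D * s2"
proof -
  interpret prob_space M by fact
  have fm: "finite_measure M" by unfold_locales
  define Y where "Y j x = (\<Sum>i<j. F i x - \<mu>)" for j x
  define Z where "Z i x = F i x - \<mu>" for i x
  have bZ: "bnd M (Z i)" for i unfolding Z_def by (intro bnd_diff bF bnd_const)
  have bY: "bnd M (Y j)" for j unfolding Y_def by (intro bnd_sum bnd_diff bF bnd_const)
  have intF: "integrable M (F i)" for i by (rule bnd_integrable[OF fm bF])
  have intFF: "integrable M (\<lambda>x. F i x * F i' x)" for i i' by (rule bnd_integrable[OF fm bnd_mult[OF bF bF]])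
  have eq: "(1 / real D) * (\<Sum>j<D. \<Sum>i<j. F i x) - (1 / real D) * (\<Sum>j<D. real j * \<mu>) = (1 / real D) * (\<Sum>j<D. Y j x)" for x
    unfolding Y_def by (simp add: sum_subtractf right_diff_distrib)
  have pw: "((1 / real D) * (\<Sum>j<D. Y j x))^2 \<le> (1 / real D) * (\<Sum>j<D. (Y j x)^2)" for x
  proof -
    have "(\<Sum>j<D. Y j x)^2 \<le> (\<Sum>j<D. (Y j x)^2) * real D"
      using sum_squared_le_sum_of_squares[of "\<lambda>j. Y j x" "{..<D}"] by simp
    then show ?thesis using D by (simp add: power2_eq_square field_simps)
  qed
  have ZZ: "(\<integral>x. Z i x * Z i' x \<partial>M) = (if i = i' then s2 - \<mu>^2 else 0)" if "i < D" "i' < D" for i i'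
  proof -
    have "(\<integral>x. Z i x * Z i' x \<partial>M) = (\<integral>x. F i x * F i' x - \<mu> * F i x - \<mu> * F i' x + \<mu>^2 \<partial>M)"
      unfolding Z_def by (intro Bochner_Integration.integral_cong refl) (simp add: algebra_simps power2_eq_square)
    also have "\<dots> = (\<integral>x. F i x * F i' x \<partial>M) - \<mu> * \<mu> - \<mu> * \<mu> + \<mu>^2"
      using intF intFF by (simp add: mean prob_space)
    also have "\<dots> = (if i = i' then s2 - \<mu>^2 else 0)"
      using unc[OF that] sq[of i] by (auto simp: power2_eq_square)
    finally show ?thesis .
  qed
  have EY: "(\<integral>x. (Y j x)^2 \<partial>M) \<le> real D * s2" if "j \<le> D" for j
  proof -
    have "(\<integral>x. (Y j x)^2 \<partial>M) = (\<Sum>i<j. \<Sum>i'<j. \<integral>x. Z i x * Z i' x \<partial>M)"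
      unfolding Y_def Z_def[symmetric] by (rule sq_sum_integral[OF fm bZ])
    also have "\<dots> = (\<Sum>i<j. \<Sum>i'<j. (if i = i' then s2 - \<mu>^2 else 0))"
      using that by (intro sum.cong refl) (simp add: ZZ)
    also have "\<dots> = real j * (s2 - \<mu>^2)" by (simp add: sum.delta)
    also have "\<dots> \<le> real j * s2" by (simp add: mult_left_mono)
    also have "\<dots> \<le> real D * s2"
    proof (rule mult_right_mono)
      show "real j \<le> real D" using that by simp
      have "0 \<le> (\<integral>x. (F 0 x)^2 \<partial>M)" by (simp add: integral_nonneg)
      then show "0 \<le> s2" using sq by simp
    qed
    finally show ?thesis .
  qed
  have "(\<integral>x. ((1 / real D) * (\<Sum>j<D. \<Sum>i<j. F i x) - (1 / real D) * (\<Sum>j<D. real j * \<mu>))^2 \<partial>M)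
      = (\<integral>x. ((1 / real D) * (\<Sum>j<D. Y j x))^2 \<partial>M)" by (simp only: eq)
  also have "\<dots> \<le> (\<integral>x. (1 / real D) * (\<Sum>j<D. (Y j x)^2) \<partial>M)"
    by (intro integral_mono pw bnd_integrable[OF fm] bnd_power2 bnd_cmult bnd_sum bY)
  also have "\<dots> = (1 / real D) * (\<Sum>j<D. \<integral>x. (Y j x)^2 \<partial>M)"
    by (simp add: Bochner_Integration.integral_sum bnd_integrable[OF fm] bnd_power2 bY)
  also have "\<dots> \<le> (1 / real D) * (\<Sum>j<D. real D * s2)"
    by (intro mult_left_mono sum_mono EY) auto
  also have "\<dots> = real D * s2" using D by simp
  finally show ?thesis .
qed


lemma Gfun_meas:
  assumes T: "T \<in> measurable M M" and fk: "f k \<in> borel_measurable M"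
  shows "Gfun \<alpha> T f k \<in> borel_measurable M"
  unfolding Gfun_def using measurable_compose_n[OF T] fk by measurable

lemma Sh_crude:
  assumes sys: "ergodic_aperiodic_pps M T" and fk: "f k \<in> borel_measurable M"
    and AEB: "AE x in M. \<forall>j. 0 \<le> f k ((T^^j) x) \<and> f k ((T^^j) x) \<le> B"
    and D: "Dseq \<alpha> k > 0"
  shows "(\<integral>x. (birkhoff_sum T n (h_seq \<alpha> T f k) x)^2 \<partial>M) \<le> (real (Dseq \<alpha> k) * B)^2"
proof -
  interpret prob_space M using pps_basic[OF sys] by simp
  note T = pps_basic(2)[OF sys]
  define D where "D = Dseq \<alpha> k"
  have D0: "0 < real D" using D unfolding D_def by simp
  have Gb: "0 \<le> Gfun \<alpha> T f k y \<and> Gfun \<alpha> T f k y \<le> real D * B" if "\<forall>j. 0 \<le> f k ((T^^j) y) \<and> f k ((T^^j) y) \<le> B" for y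
  proof -
    have s1: "0 \<le> (\<Sum>i<j. f k ((T^^i) y)) \<and> (\<Sum>i<j. f k ((T^^i) y)) \<le> real D * B" if "j < D" for j
    proof
      show "0 \<le> (\<Sum>i<j. f k ((T^^i) y))" using \<open>\<forall>j. _\<close> by (intro sum_nonneg) auto
      have "(\<Sum>i<j. f k ((T^^i) y)) \<le> (\<Sum>i<j. B)" using \<open>\<forall>j. _\<close> by (intro sum_mono) auto
      also have "\<dots> = real j * B" by simp
      also have "\<dots> \<le> real D * B"
      proof (rule mult_right_mono)
        show "real j \<le> real D" using that by simp
        show "0 \<le> B" using \<open>\<forall>j. _\<close> by (meson order.trans)
      qed
      finally show "(\<Sum>i<j. f k ((T^^i) y)) \<le> real D * B" .
    qed
    have "0 \<le> (\<Sum>j<D. \<Sum>i<j. f k ((T^^i) y))" by (rule sum_nonneg) (use s1 in auto)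
    moreover have "(\<Sum>j<D. \<Sum>i<j. f k ((T^^i) y)) \<le> (\<Sum>j<D. real D * B)" by (rule sum_mono) (use s1 in auto)
    ultimately show ?thesis unfolding Gfun_def D_def[symmetric] using D0
      by (auto simp: field_simps)
  qed
  have AE2: "AE x in M. (birkhoff_sum T n (h_seq \<alpha> T f k) x)^2 \<le> (real D * B)^2"
    using AEB
  proof eventually_elim
    case (elim x)
    have h2: "\<forall>j. 0 \<le> f k ((T^^j) ((T^^n) x)) \<and> f k ((T^^j) ((T^^n) x)) \<le> B"
    proof
      fix j
      have "(T^^j) ((T^^n) x) = (T^^(j+n)) x" by (simp add: funpow_add)
      then show "0 \<le> f k ((T^^j) ((T^^n) x)) \<and> f k ((T^^j) ((T^^n) x)) \<le> B"
        using elim by simp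
    qed
    have "\<bar>Gfun \<alpha> T f k x - Gfun \<alpha> T f k ((T^^n) x)\<bar> \<le> real D * B"
      using Gb[OF elim] Gb[OF h2] by linarith
    then have "\<bar>Gfun \<alpha> T f k x - Gfun \<alpha> T f k ((T^^n) x)\<bar>^2 \<le> (real D * B)^2"
      by (rule power_mono) simp
    then show ?case unfolding birk_h_eq[OF D] by (simp only: power2_abs)
  qed
  have "(\<integral>x. (birkhoff_sum T n (h_seq \<alpha> T f k) x)^2 \<partial>M) \<le> (\<integral>x. (real D * B)^2 \<partial>M)"
  proof (rule integral_mono_AE)
    show "integrable M (\<lambda>x. (real D * B)\<^sup>2)" by simp
    have "bnd M (\<lambda>x. (birkhoff_sum T n (h_seq \<alpha> T f k) x)^2)"
      unfolding bnd_def
    proof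
      show "(\<lambda>x. (birkhoff_sum T n (h_seq \<alpha> T f k) x)\<^sup>2) \<in> borel_measurable M"
        unfolding birk_h_eq[OF D] using Gfun_meas[of T M f k \<alpha>, OF T fk] measurable_compose_n[OF T] by measurable
      show "\<exists>B. AE x in M. \<bar>(birkhoff_sum T n (h_seq \<alpha> T f k) x)\<^sup>2\<bar> \<le> B"
        using AE2 by (intro exI[of _ "(real D * B)^2"]) simp
    qed
    then show "integrable M (\<lambda>x. (birkhoff_sum T n (h_seq \<alpha> T f k) x)\<^sup>2)"
      by (rule bnd_integrable[rotated]) unfold_locales
  qed (rule AE2)
  then show ?thesis unfolding D_def by (simp add: prob_space)
qed


lemma Sh_var:
  assumes sys: "ergodic_aperiodic_pps M T" and fk: "f k \<in> borel_measurable M"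
    and AEB: "AE x in M. \<forall>j. 0 \<le> f k ((T^^j) x) \<and> f k ((T^^j) x) \<le> B"
    and D: "Dseq \<alpha> k > 0"
    and unc: "\<And>i i'. i < Dseq \<alpha> k \<Longrightarrow> i' < Dseq \<alpha> k \<Longrightarrow> i \<noteq> i' \<Longrightarrow>
       (\<integral>x. f k ((T^^i) x) * f k ((T^^i') x) \<partial>M) = (\<integral>x. f k x \<partial>M)^2"
  shows "(\<integral>x. (birkhoff_sum T n (h_seq \<alpha> T f k) x)^2 \<partial>M) \<le> 4 * real (Dseq \<alpha> k) * (\<integral>x. (f k x)^2 \<partial>M)"
proof -
  interpret prob_space M using pps_basic[OF sys] by simp
  have fm: "finite_measure M" by unfold_locales
  note T = pps_basic(2)[OF sys]
  note Tn = pps_basic(3)[OF sys]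
  note inv = pps_basic(4)[OF sys]
  define D where "D = Dseq \<alpha> k"
  define F where "F i x = f k ((T^^i) x)" for i x
  define \<mu> where "\<mu> = (\<integral>x. f k x \<partial>M)"
  define s2 where "s2 = (\<integral>x. (f k x)^2 \<partial>M)"
  define G where "G = Gfun \<alpha> T f k"
  define c where "c = (1 / real D) * (\<Sum>j<D. real j * \<mu>)"
  have bF: "bnd M (F i)" for i
    unfolding bnd_def
  proof
    show "F i \<in> borel_measurable M" unfolding F_def using Tn[of i] fk by measurable
    show "\<exists>B. AE x in M. \<bar>F i x\<bar> \<le> B"
      using AEB by (intro exI[of _ B]) (auto simp: F_def elim!: eventually_mono)
  qed
  have mean: "(\<integral>x. F i x \<partial>M) = \<mu>" for i
    unfolding F_def \<mu>_def by (rule integral_invariant[OF Tn inv fk])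
  have sq: "(\<integral>x. (F i x)^2 \<partial>M) = s2" for i
    unfolding F_def s2_def by (rule integral_invariant[OF Tn inv]) (use fk in measurable)
  have unc': "(\<integral>x. F i x * F i' x \<partial>M) = \<mu>^2" if "i < D" "i' < D" "i \<noteq> i'" for i i'
    unfolding F_def \<mu>_def using unc that unfolding D_def by simp
  have Geq: "G x = (1 / real D) * (\<Sum>j<D. \<Sum>i<j. F i x)" for x
    unfolding G_def Gfun_def F_def D_def ..
  have vb: "(\<integral>x. (G x - c)^2 \<partial>M) \<le> real D * s2"
    unfolding Geq c_def
    by (rule var_bound[OF _ bF mean sq unc']) (use D D_def in \<open>auto intro: prob_space_axioms\<close>)
  have bG: "bnd M G" unfolding Geq[abs_def] by (intro bnd_cmult bnd_sum bF)
  have bGc: "bnd M (\<lambda>x. (G x - c)^2)" by (intro bnd_power2 bnd_diff bG bnd_const)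
  have bGcT: "bnd M (\<lambda>x. (G ((T^^n) x) - c)^2)" by (rule bnd_compose[OF Tn inv bGc])
  have Gm: "G \<in> borel_measurable M" using bG unfolding bnd_def by simp
  have "(\<integral>x. (birkhoff_sum T n (h_seq \<alpha> T f k) x)^2 \<partial>M) = (\<integral>x. (G x - G ((T^^n) x))^2 \<partial>M)"
    unfolding birk_h_eq[OF D] G_def ..
  also have "\<dots> \<le> (\<integral>x. 2 * (G x - c)^2 + 2 * (G ((T^^n) x) - c)^2 \<partial>M)"
  proof (rule integral_mono)
    show "integrable M (\<lambda>x. (G x - G ((T^^n) x))^2)"
      by (intro bnd_integrable[OF fm] bnd_power2 bnd_diff bG bnd_compose[OF Tn inv])
    show "integrable M (\<lambda>x. 2 * (G x - c)^2 + 2 * (G ((T^^n) x) - c)^2)"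
      by (intro bnd_integrable[OF fm] bnd_add bnd_cmult bGc bGcT)
    show "(G x - G ((T^^n) x))^2 \<le> 2 * (G x - c)^2 + 2 * (G ((T^^n) x) - c)^2" for x
    proof -
      have "0 \<le> ((G x - c) + (G ((T^^n) x) - c))^2" by simp
      then show ?thesis by (simp add: power2_eq_square algebra_simps)
    qed
  qed
  also have "\<dots> = 2 * (\<integral>x. (G x - c)^2 \<partial>M) + 2 * (\<integral>x. (G ((T^^n) x) - c)^2 \<partial>M)"
    using bnd_integrable[OF fm bGc] bnd_integrable[OF fm bGcT] by simp
  also have "(\<integral>x. (G ((T^^n) x) - c)^2 \<partial>M) = (\<integral>x. (G x - c)^2 \<partial>M)"
    by (rule integral_invariant[OF Tn inv]) (use Gm in measurable)
  also have "2 * (\<integral>x. (G x - c)^2 \<partial>M) + 2 * (\<integral>x. (G x - c)^2 \<partial>M) \<le> 4 * (real D * s2)"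
    using vb by simp
  finally show ?thesis unfolding D_def s2_def by simp
qed


definition Zv :: "(nat \<Rightarrow> nat \<Rightarrow> 'b \<Rightarrow> real) \<Rightarrow> nat \<Rightarrow> nat \<Rightarrow> 'b \<Rightarrow> real" where
  "Zv X k m \<omega> = Ztr k (Ytr k (X k m \<omega>))"

locale setting =
  fixes M :: "'a measure" and T :: "'a \<Rightarrow> 'a"
    and P :: "'b measure" and X :: "nat \<Rightarrow> nat \<Rightarrow> 'b \<Rightarrow> real"
    and f :: "nat \<Rightarrow> 'a \<Rightarrow> real" and \<alpha> :: real
  assumes sys: "ergodic_aperiodic_pps M T"
    and alpha: "1 < \<alpha>" "\<alpha> < 2"
    and P: "prob_space P"
    and indep: "prob_space.indep_vars P (\<lambda>_. borel) (\<lambda>(k, m). X k m) {(k, m). 1 \<le> k \<and> 1 \<le> m}"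
    and laws: "\<And>k m. 1 \<le> k \<Longrightarrow> 1 \<le> m \<Longrightarrow> has_stable_law P (X k m) \<alpha> (real k powr (-1 / \<alpha>)) 1 0"
    and adm: "admissible M T P X f"
begin

lemma Xm[measurable]: "1 \<le> k \<Longrightarrow> 1 \<le> m \<Longrightarrow> X k m \<in> borel_measurable P"
  using laws unfolding has_stable_law_def by auto

lemma fm[measurable]: "f k \<in> borel_measurable M"
  using adm unfolding admissible_def by auto

lemma Tm[measurable]: "T \<in> measurable M M" using pps_basic[OF sys] by simp

definition "\<Phi> x = (\<lambda>i\<in>adm_index. f (fst i) ((T ^^ snd i) x))"
definition "\<Psi> \<omega> = (\<lambda>i\<in>adm_index. Ztr (fst i) (Ytr (fst i) (X (fst i) (snd i + 1) \<omega>)))"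
abbreviation "PI \<equiv> PiM adm_index (\<lambda>_. borel :: real measure)"

lemma Phi_m: "\<Phi> \<in> measurable M PI"
  unfolding \<Phi>_def[abs_def]
  by (rule measurable_restrict) (use measurable_compose_n[OF Tm] in measurable)

lemma Psi_m: "\<Psi> \<in> measurable P PI"
  unfolding \<Psi>_def[abs_def]
proof (rule measurable_restrict)
  fix i assume "i \<in> adm_index"
  then have "1 \<le> fst i" unfolding adm_index_def by auto
  then show "(\<lambda>\<omega>. Ztr (fst i) (Ytr (fst i) (X (fst i) (snd i + 1) \<omega>))) \<in> borel_measurable P"
    using Xm[of "fst i" "snd i + 1"] by measurable
qed

lemma distr_eq: "distr M PI \<Phi> = distr P PI \<Psi>"
  using adm unfolding admissible_def \<Phi>_def[abs_def] \<Psi>_def[abs_def] by simp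

lemma transfer_int:
  fixes g :: "((nat \<times> nat) \<Rightarrow> real) \<Rightarrow> real"
  assumes g: "g \<in> borel_measurable PI"
  shows "(\<integral>x. g (\<Phi> x) \<partial>M) = (\<integral>\<omega>. g (\<Psi> \<omega>) \<partial>P)"
proof -
  have "(\<integral>x. g (\<Phi> x) \<partial>M) = integral\<^sup>L (distr M PI \<Phi>) g"
    by (rule integral_distr[OF Phi_m g, symmetric])
  also have "\<dots> = integral\<^sup>L (distr P PI \<Psi>) g" by (simp add: distr_eq)
  also have "\<dots> = (\<integral>\<omega>. g (\<Psi> \<omega>) \<partial>P)" by (rule integral_distr[OF Psi_m g])
  finally show ?thesis .
qed

lemma transfer_AE:
  assumes Q: "{\<omega> \<in> space PI. Q \<omega>} \<in> sets PI"
  shows "(AE x in M. Q (\<Phi> x)) \<longleftrightarrow> (AE \<omega> in P. Q (\<Psi> \<omega>))"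
proof -
  have "(AE x in M. Q (\<Phi> x)) \<longleftrightarrow> (AE y in distr M PI \<Phi>. Q y)"
    by (rule AE_distr_iff[OF Phi_m Q, symmetric])
  also have "\<dots> \<longleftrightarrow> (AE y in distr P PI \<Psi>. Q y)" unfolding distr_eq ..
  also have "\<dots> \<longleftrightarrow> (AE \<omega> in P. Q (\<Psi> \<omega>))" by (rule AE_distr_iff[OF Psi_m Q])
  finally show ?thesis .
qed

lemma adm_mem: "1 \<le> k \<Longrightarrow> i < 2 * dseq k \<Longrightarrow> (k, i) \<in> adm_index"
  unfolding adm_index_def by simp

lemma dseq_pos: "0 < dseq k" unfolding dseq_def by simp

lemma AE_bound:
  assumes k: "1 \<le> k"
  shows "AE x in M. \<forall>j. 0 \<le> f k ((T^^j) x) \<and> f k ((T^^j) x) \<le> 4^k"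
proof -
  have mem: "(k, 0) \<in> adm_index" using adm_mem[OF k] dseq_pos by simp
  have "AE x in M. 0 \<le> \<Phi> x (k,0) \<and> \<Phi> x (k,0) \<le> 4^k"
  proof (subst transfer_AE)
    show "{\<omega> \<in> space PI. 0 \<le> \<omega> (k,0) \<and> \<omega> (k,0) \<le> 4^k} \<in> sets PI"
      using mem by measurable
    show "AE \<omega> in P. 0 \<le> \<Psi> \<omega> (k,0) \<and> \<Psi> \<omega> (k,0) \<le> 4^k"
      using mem by (simp add: \<Psi>_def Ztr_nonneg Ztr_le)
  qed
  then have b0: "AE x in M. 0 \<le> f k x \<and> f k x \<le> 4^k"
    using mem by (simp add: \<Phi>_def)
  have "AE x in M. 0 \<le> f k ((T^^j) x) \<and> f k ((T^^j) x) \<le> 4^k" for j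
  proof -
    have "AE x in distr M M (T^^j). 0 \<le> f k x \<and> f k x \<le> 4^k"
      unfolding pps_basic(4)[OF sys, of j] by (rule b0)
    then show ?thesis
      by (subst (asm) AE_distr_iff) (use measurable_compose_n[OF Tm] in measurable)
  qed
  then show ?thesis by (simp add: AE_all_countable)
qed

end


definition Cst :: "real \<Rightarrow> real" where "Cst \<alpha> = max (4 * Kz \<alpha>) 256"

context setting begin

lemma Phi_at: "1 \<le> k \<Longrightarrow> i < 2 * dseq k \<Longrightarrow> \<Phi> x (k, i) = f k ((T^^i) x)"
  using adm_mem unfolding \<Phi>_def by simp

lemma Psi_at: "1 \<le> k \<Longrightarrow> i < 2 * dseq k \<Longrightarrow> \<Psi> \<omega> (k, i) = Zv X k (i+1) \<omega>"
  using adm_mem unfolding \<Psi>_def Zv_def by simp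

lemma int_pair:
  assumes k: "1 \<le> k" and i: "i < 2 * dseq k" and i': "i' < 2 * dseq k"
  shows "(\<integral>x. f k ((T^^i) x) * f k ((T^^i') x) \<partial>M) = (\<integral>\<omega>. Zv X k (i+1) \<omega> * Zv X k (i'+1) \<omega> \<partial>P)"
proof -
  have m1: "(k,i) \<in> adm_index" "(k,i') \<in> adm_index" using adm_mem k i i' by auto
  have g: "(\<lambda>\<omega>. \<omega> (k,i) * \<omega> (k,i')) \<in> borel_measurable PI" using m1 by measurable
  have "(\<integral>x. \<Phi> x (k,i) * \<Phi> x (k,i') \<partial>M) = (\<integral>\<omega>. \<Psi> \<omega> (k,i) * \<Psi> \<omega> (k,i') \<partial>P)"
    by (rule transfer_int[OF g])
  then show ?thesis using Phi_at[OF k i] Phi_at[OF k i'] Psi_at[OF k i] Psi_at[OF k i'] by simp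
qed

lemma int_single:
  fixes g :: "real \<Rightarrow> real"
  assumes k: "1 \<le> k" and i: "i < 2 * dseq k" and g: "g \<in> borel_measurable borel"
  shows "(\<integral>x. g (f k ((T^^i) x)) \<partial>M) = (\<integral>\<omega>. g (Zv X k (i+1) \<omega>) \<partial>P)"
proof -
  have m1: "(k,i) \<in> adm_index" using adm_mem k i by auto
  have g': "(\<lambda>\<omega>. g (\<omega> (k,i))) \<in> borel_measurable PI" using m1 g by measurable
  have "(\<integral>x. g (\<Phi> x (k,i)) \<partial>M) = (\<integral>\<omega>. g (\<Psi> \<omega> (k,i)) \<partial>P)"
    by (rule transfer_int[OF g'])
  then show ?thesis using Phi_at[OF k i] Psi_at[OF k i] by simp
qed

lemma Zv_m[measurable]: "1 \<le> k \<Longrightarrow> 1 \<le> m \<Longrightarrow> Zv X k m \<in> borel_measurable P"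
  unfolding Zv_def[abs_def] by measurable

lemma Zv_int: "1 \<le> k \<Longrightarrow> 1 \<le> m \<Longrightarrow> integrable P (Zv X k m)"
  by (rule finite_measure.integrable_const_bound[where B="4^k"])
     (auto simp: Zv_def Ztr_nonneg Ztr_le prob_space.finite_measure[OF P])

lemma indep_pair:
  assumes k: "1 \<le> k" and m: "1 \<le> m" "1 \<le> m'" "m \<noteq> m'"
  shows "(\<integral>\<omega>. Zv X k m \<omega> * Zv X k m' \<omega> \<partial>P) = (\<integral>\<omega>. Zv X k m \<omega> \<partial>P) * (\<integral>\<omega>. Zv X k m' \<omega> \<partial>P)"
proof -
  interpret prob_space P by (rule P)
  define J where "J = {(k,m), (k,m')}"
  have JI: "J \<subseteq> {(k, m). 1 \<le> k \<and> 1 \<le> m}" unfolding J_def using k m by auto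
  have ind: "indep_vars (\<lambda>_. borel) (\<lambda>(k, m). X k m) J"
    by (rule indep_vars_subset[OF indep JI])
  have ind2: "indep_vars (\<lambda>_. borel) (\<lambda>i \<omega>. Ztr (fst i) (Ytr (fst i) ((\<lambda>(k, m). X k m) i \<omega>))) J"
    by (rule indep_vars_compose2[OF ind]) measurable
  have fin: "finite J" unfolding J_def by simp
  have intJ: "integrable P (\<lambda>\<omega>. Ztr (fst i) (Ytr (fst i) ((\<lambda>(k, m). X k m) i \<omega>)))" if "i \<in> J" for i
    using that Zv_int[OF k m(1)] Zv_int[OF k m(2)] unfolding J_def Zv_def[abs_def] by auto
  have "(\<integral>\<omega>. (\<Prod>i\<in>J. Ztr (fst i) (Ytr (fst i) ((\<lambda>(k, m). X k m) i \<omega>))) \<partial>P)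
      = (\<Prod>i\<in>J. \<integral>\<omega>. Ztr (fst i) (Ytr (fst i) ((\<lambda>(k, m). X k m) i \<omega>)) \<partial>P)"
    by (rule indep_vars_lebesgue_integral[OF fin ind2 intJ])
  moreover have "(k,m) \<noteq> (k,m')" using m by simp
  ultimately show ?thesis unfolding J_def Zv_def by simp
qed

lemma unc:
  assumes k: "1 \<le> k" and i: "i < 2 * dseq k" and i': "i' < 2 * dseq k" and ne: "i \<noteq> i'"
  shows "(\<integral>x. f k ((T^^i) x) * f k ((T^^i') x) \<partial>M) = (\<integral>x. f k x \<partial>M)^2"
proof -
  have e: "(\<integral>x. f k ((T^^j) x) \<partial>M) = (\<integral>\<omega>. Zv X k (j+1) \<omega> \<partial>P)" if "j < 2 * dseq k" for j
    using int_single[OF k that, of "\<lambda>y. y"] by simp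
  have inv: "(\<integral>x. f k ((T^^j) x) \<partial>M) = (\<integral>x. f k x \<partial>M)" for j
    by (rule integral_invariant[OF pps_basic(3)[OF sys] pps_basic(4)[OF sys] fm])
  have "(\<integral>x. f k ((T^^i) x) * f k ((T^^i') x) \<partial>M) = (\<integral>\<omega>. Zv X k (i+1) \<omega> * Zv X k (i'+1) \<omega> \<partial>P)"
    by (rule int_pair[OF k i i'])
  also have "\<dots> = (\<integral>\<omega>. Zv X k (i+1) \<omega> \<partial>P) * (\<integral>\<omega>. Zv X k (i'+1) \<omega> \<partial>P)"
    using ne by (intro indep_pair k) auto
  also have "\<dots> = (\<integral>x. f k x \<partial>M)^2"
    using e[OF i] e[OF i'] inv[of i] inv[of i'] by (simp add: power2_eq_square)
  finally show ?thesis .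
qed

lemma sq_bound:
  assumes k: "1 \<le> k"
  shows "(\<integral>x. (f k x)^2 \<partial>M) \<le> Kz \<alpha> * 4 powr (real k * (2-\<alpha>)) / real k"
proof -
  have "(\<integral>x. (f k x)^2 \<partial>M) = (\<integral>x. (f k ((T^^0) x))^2 \<partial>M)" by simp
  also have "\<dots> = (\<integral>\<omega>. (Zv X k (0+1) \<omega>)^2 \<partial>P)"
    by (rule int_single[OF k]) (use dseq_pos in auto)
  also have "\<dots> = (\<integral>\<omega>. (Ztr k (Ytr k (X k 1 \<omega>)))^2 \<partial>P)" by (simp add: Zv_def)
  also have "\<dots> \<le> Kz \<alpha> * 4 powr (real k * (2-\<alpha>)) / real k"
  proof (rule Z2_bound[OF P])
    show "X k 1 \<in> borel_measurable P" using k by simp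
    show "char (distr P borel (X k 1)) \<theta> = stable_char \<alpha> (real k powr (-1 / \<alpha>)) 1 0 \<theta>" for \<theta>
      using laws[OF k, of 1] unfolding has_stable_law_def by simp
    show "0 < real k powr (-1 / \<alpha>)" using k by simp
    show "(real k powr (-1 / \<alpha>)) powr \<alpha> = 1 / real k"
    proof -
      have "(real k powr (-1 / \<alpha>)) powr \<alpha> = real k powr (-1 / \<alpha> * \<alpha>)" by (rule powr_powr)
      also have "-1 / \<alpha> * \<alpha> = -1" using alpha by simp
      finally show ?thesis using k by (simp add: powr_minus_divide)
    qed
  qed (use alpha k in auto)
  finally show ?thesis .
qed

end


lemma Dseq_bounds:
  assumes a: "0 < \<alpha>"
  shows "0 < Dseq \<alpha> k" "real (Dseq \<alpha> k) \<le> 4 powr (\<alpha> * real k)"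
proof -
  have ge1: "1 \<le> 4 powr (\<alpha> * real k)" using a by (intro ge_one_powr_ge_zero) auto
  then have "1 \<le> \<lfloor>4 powr (\<alpha> * real k)\<rfloor>" by (simp add: one_le_floor)
  then show "0 < Dseq \<alpha> k" unfolding Dseq_def by simp
  have "0 \<le> \<lfloor>4 powr (\<alpha> * real k)\<rfloor>" using ge1 by simp
  then have "real (Dseq \<alpha> k) = real_of_int \<lfloor>4 powr (\<alpha> * real k)\<rfloor>" unfolding Dseq_def by simp
  also have "\<dots> \<le> 4 powr (\<alpha> * real k)" by simp
  finally show "real (Dseq \<alpha> k) \<le> 4 powr (\<alpha> * real k)" .
qed

context setting begin

lemma Sh_bound:
  assumes k: "1 \<le> k"
  shows "(\<integral>x. (birkhoff_sum T n (h_seq \<alpha> T f k) x)^2 \<partial>M) \<le> Cst \<alpha> * 16^k / real k"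
proof -
  define D where "D = Dseq \<alpha> k"
  have a0: "0 < \<alpha>" using alpha by simp
  have D0: "0 < Dseq \<alpha> k" by (rule Dseq_bounds(1)[OF a0])
  have Dle: "real D \<le> 4 powr (\<alpha> * real k)" unfolding D_def by (rule Dseq_bounds(2)[OF a0])
  have C: "256 \<le> Cst \<alpha>" "4 * Kz \<alpha> \<le> Cst \<alpha>" unfolding Cst_def by auto
  show ?thesis
  proof (cases "k = 1")
    case True
    have "(\<integral>x. (birkhoff_sum T n (h_seq \<alpha> T f k) x)^2 \<partial>M) \<le> (real D * 4^k)^2"
      unfolding D_def by (rule Sh_crude[where f=f and k=k and M=M and T=T, OF sys fm AE_bound[OF k] D0])
    also have "real D \<le> 16"
    proof -
      have "4 powr (\<alpha> * real k) \<le> 4 powr 2" using True alpha by (intro powr_mono) auto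
      then show ?thesis using Dle by simp
    qed
    then have "(real D * 4^k)^2 \<le> (16 * 4)^2" using True by (intro power_mono) auto
    also have "\<dots> \<le> Cst \<alpha> * 16^k / real k" using True C by simp
    finally show ?thesis by simp
  next
    case False
    then have k2: "2 \<le> k" using k by simp
    have Dd: "D \<le> 2 * dseq k"
    proof -
      have "real D \<le> 4 powr (2 * real k)"
      proof -
        have "\<alpha> * real k \<le> 2 * real k" using alpha by (intro mult_right_mono) auto
        then have "4 powr (\<alpha> * real k) \<le> 4 powr (2 * real k)" by (rule powr_mono) simp
        then show ?thesis using Dle by linarith
      qed
      also have "4 powr (2 * real k) = 4 ^ (2 * k)" by (simp add: powr_realpow[symmetric])
      also have "(4::real) ^ (2 * k) \<le> 4 ^ (k^2)"
        using k2 by (intro power_increasing) (auto simp: power2_eq_square)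
      also have "(4::real) ^ (k^2) = real (dseq k)" unfolding dseq_def by simp
      finally show ?thesis by linarith
    qed
    have "(\<integral>x. (birkhoff_sum T n (h_seq \<alpha> T f k) x)^2 \<partial>M) \<le> 4 * real D * (\<integral>x. (f k x)^2 \<partial>M)"
      unfolding D_def
    proof (rule Sh_var[where f=f and k=k and M=M and T=T, OF sys fm AE_bound[OF k] D0])
      fix i i' assume "i < Dseq \<alpha> k" "i' < Dseq \<alpha> k" "i \<noteq> i'"
      then show "(\<integral>x. f k ((T^^i) x) * f k ((T^^i') x) \<partial>M) = (\<integral>x. f k x \<partial>M)^2"
        using Dd unfolding D_def by (intro unc k) auto
    qed
    also have "\<dots> \<le> 4 * 4 powr (\<alpha> * real k) * (Kz \<alpha> * 4 powr (real k * (2-\<alpha>)) / real k)"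
    proof (rule mult_mono)
      show "4 * real D \<le> 4 * 4 powr (\<alpha> * real k)" using Dle by simp
      show "(\<integral>x. (f k x)^2 \<partial>M) \<le> Kz \<alpha> * 4 powr (real k * (2-\<alpha>)) / real k" by (rule sq_bound[OF k])
      show "0 \<le> (\<integral>x. (f k x)^2 \<partial>M)" by (simp add: integral_nonneg)
    qed simp
    also have "\<dots> = (4 * Kz \<alpha>) * (4 powr (\<alpha> * real k) * 4 powr (real k * (2-\<alpha>))) / real k" by simp
    also have "4 powr (\<alpha> * real k) * 4 powr (real k * (2-\<alpha>)) = 16^k"
    proof -
      have "4 powr (\<alpha> * real k) * 4 powr (real k * (2-\<alpha>)) = 4 powr (real (2*k))"
        by (simp add: powr_add[symmetric] algebra_simps)
      also have "\<dots> = 4^(2*k)" by (rule powr_realpow) simp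
      also have "\<dots> = (16::real)^k" by (simp add: power_mult)
      finally show ?thesis .
    qed
    also have "(4 * Kz \<alpha>) * 16^k / real k \<le> Cst \<alpha> * 16^k / real k"
      using C by (intro divide_right_mono mult_right_mono) auto
    finally show ?thesis .
  qed
qed

end


lemma geo_sqrt_sum:
  assumes "1 \<le> N"
  shows "(\<Sum>k\<in>{1..N}. 4^k / sqrt (real k)) \<le> 2 * 4^N / sqrt (real N)"
  using assms
proof (induction N rule: dec_induct)
  case base then show ?case by simp
next
  case (step N)
  have N1: "1 \<le> real N" using step.hyps by simp
  have key: "2 * 4^N / sqrt (real N) \<le> 4^(Suc N) / sqrt (real (Suc N))"
  proof -
    have "sqrt (real N + 1) \<le> sqrt (4 * real N)" using N1 by (intro real_sqrt_le_mono) simp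
    also have "\<dots> = 2 * sqrt (real N)" by (simp add: real_sqrt_mult)
    finally have s: "sqrt (real N + 1) \<le> 2 * sqrt (real N)" .
    have p1: "0 < sqrt (real N)" using N1 by simp
    have p2: "0 < sqrt (real N + 1)" using N1 by simp
    have "2 * 4^N * sqrt (real N + 1) \<le> 2 * 4^N * (2 * sqrt (real N))"
      using s by (intro mult_left_mono) auto
    then have "2 * 4^N * sqrt (real N + 1) \<le> 4^(Suc N) * sqrt (real N)" by simp
    then show ?thesis using p1 p2 by (simp add: divide_simps add.commute)
  qed
  have "(\<Sum>k\<in>{1..Suc N}. 4^k / sqrt (real k)) = (\<Sum>k\<in>{1..N}. 4^k / sqrt (real k)) + 4^(Suc N) / sqrt (real (Suc N))"
    using step.hyps by (simp add: sum.atLeast_Suc_atMost_Suc_shift sum.cl_ivl_Suc)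
  also have "\<dots> \<le> 2 * 4^N / sqrt (real N) + 4^(Suc N) / sqrt (real (Suc N))"
    using step.IH by simp
  also have "\<dots> \<le> 2 * 4^(Suc N) / sqrt (real (Suc N))" using key by simp
  finally show ?case .
qed

lemma Kset_eq:
  "{k. 1 \<le> k \<and> real k \<le> L} = {1..nat \<lfloor>L\<rfloor>}"
proof (intro set_eqI iffI)
  fix k assume "k \<in> {k. 1 \<le> k \<and> real k \<le> L}"
  then have k: "1 \<le> k" "real k \<le> L" by auto
  then have "int k \<le> \<lfloor>L\<rfloor>" by (simp add: le_floor_iff)
  then show "k \<in> {1..nat \<lfloor>L\<rfloor>}" using k by auto
next
  fix k assume "k \<in> {1..nat \<lfloor>L\<rfloor>}"
  then have k: "1 \<le> k" "k \<le> nat \<lfloor>L\<rfloor>" by auto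
  then have "int k \<le> \<lfloor>L\<rfloor>" by linarith
  then have "real_of_int (int k) \<le> L" by (simp only: le_floor_iff)
  then have "real k \<le> L" by simp
  then show "k \<in> {k. 1 \<le> k \<and> real k \<le> L}" using k by auto
qed

lemma four_pow_le:
  assumes a: "0 < \<alpha>" and n: "1 \<le> n"
  shows "(4::real) ^ (nat \<lfloor>log 2 (real n) / (2 * \<alpha>)\<rfloor>) \<le> real n powr (1 / \<alpha>)"
proof -
  define L where "L = log 2 (real n) / (2 * \<alpha>)"
  have L0: "0 \<le> L" unfolding L_def using a n by simp
  have "(4::real) ^ (nat \<lfloor>L\<rfloor>) = 4 powr (real (nat \<lfloor>L\<rfloor>))" by (simp add: powr_realpow)
  also have "\<dots> \<le> 4 powr L" using L0 by (intro powr_mono) auto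
  also have "4 powr L = (2 powr 2) powr L" by simp
  also have "\<dots> = (2 powr (log 2 (real n))) powr (1 / \<alpha>)" unfolding powr_powr L_def using a by simp
  also have "\<dots> = real n powr (1 / \<alpha>)" using n by simp
  finally show ?thesis unfolding L_def .
qed

lemma N_lim:
  assumes a: "0 < \<alpha>"
  shows "filterlim (\<lambda>n::nat. real (nat \<lfloor>log 2 (real n) / (2 * \<alpha>)\<rfloor>)) at_top sequentially"
proof (rule filterlim_at_top_mono)
  show "filterlim (\<lambda>n::nat. log 2 (real n) / (2 * \<alpha>) - 1) at_top sequentially"
    using a by real_asymp
  show "\<forall>\<^sub>F n in sequentially. log 2 (real n) / (2 * \<alpha>) - 1 \<le> real (nat \<lfloor>log 2 (real n) / (2 * \<alpha>)\<rfloor>)"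
  proof (intro always_eventually allI)
    fix n :: nat
    define L where "L = log 2 (real n) / (2 * \<alpha>)"
    have "L - 1 \<le> real_of_int \<lfloor>L\<rfloor>" by linarith
    also have "\<dots> \<le> real (nat \<lfloor>L\<rfloor>)" by linarith
    finally show "L - 1 \<le> real (nat \<lfloor>L\<rfloor>)" .
  qed
qed


context setting begin

lemma Sk_bnd:
  assumes k: "1 \<le> k"
  shows "bnd M (\<lambda>x. birkhoff_sum T n (h_seq \<alpha> T f k) x)"
proof -
  have a0: "0 < \<alpha>" using alpha by simp
  have D0: "0 < Dseq \<alpha> k" by (rule Dseq_bounds(1)[OF a0])
  note Tn = pps_basic(3)[OF sys] and inv = pps_basic(4)[OF sys]
  have bF: "bnd M (\<lambda>x. f k ((T^^i) x))" for i
    unfolding bnd_def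
  proof
    show "(\<lambda>x. f k ((T^^i) x)) \<in> borel_measurable M" using Tn[of i] by measurable
    show "\<exists>B. AE x in M. \<bar>f k ((T^^i) x)\<bar> \<le> B"
      using AE_bound[OF k] by (intro exI[of _ "4^k"]) (auto elim!: eventually_mono)
  qed
  have bG: "bnd M (Gfun \<alpha> T f k)"
    unfolding Gfun_def[abs_def] by (intro bnd_cmult bnd_sum bF)
  show ?thesis unfolding birk_h_eq[OF D0]
    by (intro bnd_diff bG bnd_compose[OF Tn inv])
qed

lemma main_bound_n:
  assumes n: "1 \<le> n" and N: "1 \<le> nat \<lfloor>log 2 (real n) / (2 * \<alpha>)\<rfloor>" and e: "0 < \<epsilon>"
  shows "measure M {x \<in> space M. \<bar>real n powr (-1 / \<alpha>) *
              (\<Sum>k\<in>{k. 1 \<le> k \<and> real k \<le> log 2 (real n) / (2 * \<alpha>)}. birkhoff_sum T n (h_seq \<alpha> T f k) x) - 0\<bar> > \<epsilon>}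
    \<le> (2 * sqrt (Cst \<alpha>) / \<epsilon>) * inverse (sqrt (real (nat \<lfloor>log 2 (real n) / (2 * \<alpha>)\<rfloor>)))"
proof -
  interpret prob_space M using pps_basic[OF sys] by simp
  have fmM: "finite_measure M" by unfold_locales
  define N where "N = nat \<lfloor>log 2 (real n) / (2 * \<alpha>)\<rfloor>"
  define S where "S k x = birkhoff_sum T n (h_seq \<alpha> T f k) x" for k x
  define c where "c = real n powr (-1 / \<alpha>)"
  define Y where "Y x = c * (\<Sum>k\<in>{1..N}. S k x)" for x
  have a0: "0 < \<alpha>" using alpha by simp
  have N1: "1 \<le> real N" using N unfolding N_def by simp
  have c0: "0 \<le> c" unfolding c_def by simp
  have C0: "0 \<le> c * sqrt (Cst \<alpha>)" using c0 unfolding Cst_def by simp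
  have Kset: "{k. 1 \<le> k \<and> real k \<le> log 2 (real n) / (2 * \<alpha>)} = {1..N}"
    unfolding N_def by (rule Kset_eq)
  have bS: "bnd M (S k)" if "k \<in> {1..N}" for k
    unfolding S_def[abs_def] using that by (intro Sk_bnd) auto
  have bY: "bnd M Y" unfolding Y_def[abs_def] by (intro bnd_cmult bnd_sum bS)
  have Ym: "Y \<in> borel_measurable M" using bY unfolding bnd_def by simp
  have intS: "integrable M (S k)" "integrable M (\<lambda>x. (S k x)^2)" "integrable M (\<lambda>x. \<bar>S k x\<bar>)"
    if "k \<in> {1..N}" for k
    using bnd_integrable[OF fmM bS[OF that]] bnd_integrable[OF fmM bnd_power2[OF bS[OF that]]]
      bnd_integrable[OF fmM bnd_abs[OF bS[OF that]]] by auto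
  have "measure M {x \<in> space M. \<bar>Y x - 0\<bar> > \<epsilon>} \<le> measure M {x \<in> space M. \<bar>Y x\<bar> \<ge> \<epsilon>}"
  proof (rule finite_measure_mono)
    show "{x \<in> space M. \<epsilon> \<le> \<bar>Y x\<bar>} \<in> sets M" using Ym by measurable
  qed auto
  also have "\<dots> \<le> (\<integral>x. \<bar>Y x\<bar> \<partial>M) / \<epsilon>"
    by (rule integral_Markov_inequality_measure[where A="space M"])
       (use bnd_integrable[OF fmM bnd_abs[OF bY]] e in auto)
  also have "(\<integral>x. \<bar>Y x\<bar> \<partial>M) \<le> (\<integral>x. c * (\<Sum>k\<in>{1..N}. \<bar>S k x\<bar>) \<partial>M)"
  proof (rule integral_mono)
    show "integrable M (\<lambda>x. \<bar>Y x\<bar>)" by (rule bnd_integrable[OF fmM bnd_abs[OF bY]])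
    show "integrable M (\<lambda>x. c * (\<Sum>k\<in>{1..N}. \<bar>S k x\<bar>))"
      by (intro bnd_integrable[OF fmM] bnd_cmult bnd_sum bnd_abs bS)
    show "\<bar>Y x\<bar> \<le> c * (\<Sum>k\<in>{1..N}. \<bar>S k x\<bar>)" for x
    proof -
      have "\<bar>Y x\<bar> = c * \<bar>\<Sum>k\<in>{1..N}. S k x\<bar>" unfolding Y_def abs_mult using c0 by simp
      also have "\<dots> \<le> c * (\<Sum>k\<in>{1..N}. \<bar>S k x\<bar>)" using c0 by (intro mult_left_mono sum_abs)
      finally show ?thesis .
    qed
  qed
  also have "\<dots> = c * (\<Sum>k\<in>{1..N}. \<integral>x. \<bar>S k x\<bar> \<partial>M)"
    using intS by (simp add: Bochner_Integration.integral_sum)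
  also have "\<dots> \<le> c * (\<Sum>k\<in>{1..N}. sqrt (Cst \<alpha>) * (4^k / sqrt (real k)))"
  proof (intro mult_left_mono c0 sum_mono)
    fix k assume kk: "k \<in> {1..N}"
    then have k1: "1 \<le> k" by simp
    have "(\<integral>x. \<bar>S k x\<bar> \<partial>M) \<le> sqrt (\<integral>x. (S k x)^2 \<partial>M)"
      by (rule abs_integral_sq[OF prob_space_axioms intS(1)[OF kk] intS(2)[OF kk]])
    also have "\<dots> \<le> sqrt (Cst \<alpha> * 16^k / real k)"
      unfolding S_def by (intro real_sqrt_le_mono Sh_bound k1)
    also have "sqrt (Cst \<alpha> * 16^k / real k) = sqrt (Cst \<alpha>) * (4^k / sqrt (real k))"
    proof -
      have e16: "(16::real)^k = (4^k)^2" by (simp add: power2_eq_square flip: power_mult_distrib)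
      have "sqrt ((16::real)^k) = 4^k" unfolding e16 by simp
      then show ?thesis by (simp add: real_sqrt_mult real_sqrt_divide)
    qed
    finally show "(\<integral>x. \<bar>S k x\<bar> \<partial>M) \<le> sqrt (Cst \<alpha>) * (4^k / sqrt (real k))" .
  qed
  also have "\<dots> = c * sqrt (Cst \<alpha>) * (\<Sum>k\<in>{1..N}. 4^k / sqrt (real k))"
    by (simp only: sum_distrib_left mult.assoc)
  also have "\<dots> \<le> c * sqrt (Cst \<alpha>) * (2 * 4^N / sqrt (real N))"
    using C0 N unfolding N_def by (intro mult_left_mono geo_sqrt_sum) auto
  also have "\<dots> \<le> c * sqrt (Cst \<alpha>) * (2 * real n powr (1 / \<alpha>) / sqrt (real N))"
    using C0 N1 four_pow_le[OF a0 n] unfolding N_def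
    by (intro mult_left_mono divide_right_mono) auto
  also have "\<dots> = 2 * sqrt (Cst \<alpha>) * inverse (sqrt (real N))"
  proof -
    have "c * real n powr (1 / \<alpha>) = 1" unfolding c_def using n
      by (simp add: powr_add[symmetric])
    then show ?thesis by (simp add: divide_inverse algebra_simps)
  qed
  finally have "measure M {x \<in> space M. \<bar>Y x - 0\<bar> > \<epsilon>} \<le> (2 * sqrt (Cst \<alpha>) * inverse (sqrt (real N))) / \<epsilon>"
    using e by (simp add: divide_right_mono)
  then show ?thesis unfolding Y_def S_def c_def Kset N_def by (simp add: field_simps)
qed

theorem main_thm:
  "tendsto_in_prob M
           (\<lambda>n x. real n powr (-1 / \<alpha>) *
              (\<Sum>k\<in>{k. 1 \<le> k \<and> real k \<le> log 2 (real n) / (2 * \<alpha>)}. birkhoff_sum T n (h_seq \<alpha> T f k) x)) 0"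
  unfolding tendsto_in_prob_def
proof (intro allI impI)
  fix \<epsilon> :: real assume e: "0 < \<epsilon>"
  have a0: "0 < \<alpha>" using alpha by simp
  define Nn where "Nn n = real (nat \<lfloor>log 2 (real n) / (2 * \<alpha>)\<rfloor>)" for n :: nat
  have lim: "filterlim Nn at_top sequentially" unfolding Nn_def by (rule N_lim[OF a0])
  have b0: "(\<lambda>n. (2 * sqrt (Cst \<alpha>) / \<epsilon>) * inverse (sqrt (Nn n))) \<longlonglongrightarrow> 0"
  proof -
    have "(\<lambda>n. inverse (sqrt (Nn n))) \<longlonglongrightarrow> 0"
      by (rule tendsto_inverse_0_at_top[OF filterlim_compose[OF sqrt_at_top lim]])
    then show ?thesis by (rule tendsto_mult_right_zero)
  qed
  have ev: "eventually (\<lambda>n. 1 \<le> Nn n) sequentially"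
    using lim by (simp add: filterlim_at_top)
  have ev1: "eventually (\<lambda>n::nat. 1 \<le> n) sequentially" by (rule eventually_ge_at_top)
  show "(\<lambda>n. measure M {x \<in> space M. \<bar>real n powr (-1 / \<alpha>) *
              (\<Sum>k\<in>{k. 1 \<le> k \<and> real k \<le> log 2 (real n) / (2 * \<alpha>)}. birkhoff_sum T n (h_seq \<alpha> T f k) x) - 0\<bar> > \<epsilon>})
        \<longlonglongrightarrow> 0"
  proof (rule tendsto_sandwich[OF _ _ tendsto_const b0])
    show "\<forall>\<^sub>F n in sequentially. 0 \<le> measure M {x \<in> space M. \<bar>real n powr (-1 / \<alpha>) *
              (\<Sum>k\<in>{k. 1 \<le> k \<and> real k \<le> log 2 (real n) / (2 * \<alpha>)}. birkhoff_sum T n (h_seq \<alpha> T f k) x) - 0\<bar> > \<epsilon>}"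
      by simp
    show "\<forall>\<^sub>F n in sequentially. measure M {x \<in> space M. \<bar>real n powr (-1 / \<alpha>) *
              (\<Sum>k\<in>{k. 1 \<le> k \<and> real k \<le> log 2 (real n) / (2 * \<alpha>)}. birkhoff_sum T n (h_seq \<alpha> T f k) x) - 0\<bar> > \<epsilon>}
          \<le> (2 * sqrt (Cst \<alpha>) / \<epsilon>) * inverse (sqrt (Nn n))"
      using ev ev1
    proof eventually_elim
      case (elim n)
      then show ?case unfolding Nn_def by (intro main_bound_n e) auto
    qed
  qed
qed

end

theorem lemma5p6:
  fixes M :: "'a measure" and T :: "'a \<Rightarrow> 'a"
    and P :: "'b measure" and X :: "nat \<Rightarrow> nat \<Rightarrow> 'b \<Rightarrow> real"
    and f :: "nat \<Rightarrow> 'a \<Rightarrow> real" and \<alpha> :: real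
  assumes sys: "ergodic_aperiodic_pps M T"
    and alpha: "1 < \<alpha>" "\<alpha> < 2"
    and P: "prob_space P"
    and indep: "prob_space.indep_vars P (\<lambda>_. borel) (\<lambda>(k, m). X k m) {(k, m). 1 \<le> k \<and> 1 \<le> m}"
    and laws: "\<And>k m. 1 \<le> k \<Longrightarrow> 1 \<le> m \<Longrightarrow> has_stable_law P (X k m) \<alpha> (real k powr (-1 / \<alpha>)) 1 0"
    and adm: "admissible M T P X f"
  shows "tendsto_in_prob M
           (\<lambda>n x. real n powr (-1 / \<alpha>) *
              (\<Sum>k\<in>{k. 1 \<le> k \<and> real k \<le> log 2 (real n) / (2 * \<alpha>)}. birkhoff_sum T n (h_seq \<alpha> T f k) x)) 0"
proof -
  interpret setting M T P X f \<alpha>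
    by (rule setting.intro[OF sys alpha P indep laws adm])
  show ?thesis by (rule main_thm)
qed

end
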